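(* For an R$^*$-algebra $A$ the following are equivalent: (i) there is no strictly increasing infinite sequence $p_1<p_2<\cdots$ of projections in $A$ (equivalently no infinite strictly ascending chain of principal right ideals of $A$); (ii) there is no infinite family of mutually orthogonal nonzero projections in $A$; (iii) $A$ is finite-dimensional.
   Context: An R$^*$-algebra is a (not necessarily closed, not necessarily unital) $^*$-subalgebra $A$ of $B(H)$, $H$ a complex Hilbert space, such that every self-adjoint element of $A$ has finite spectrum. Projections are $p=p^2=p^*$ in $A$, ordered by $p\le q$ iff $pq=p$. *)

theory Defs
  imports "HOL-Analysis.Analysis"
begin

class complex_vector = real_vector +
  fixes scaleC :: "complex \<Rightarrow> 'a \<Rightarrow> 'a"
  assumes scaleC_add_right: "scaleC a (x + y) = scaleC a x + scaleC a y"
    and scaleC_add_left: "scaleC (a + b) x = scaleC a x + scaleC b x"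
    and scaleC_scaleC: "scaleC a (scaleC b x) = scaleC (a * b) x"
    and scaleC_one: "scaleC 1 x = x"
    and scaleR_scaleC: "scaleR r x = scaleC (complex_of_real r) x"

class complex_inner = complex_vector + real_normed_vector +
  fixes cinner :: "'a \<Rightarrow> 'a \<Rightarrow> complex"
  assumes cinner_commute: "cinner x y = cnj (cinner y x)"
    and cinner_add_left: "cinner (x + y) z = cinner x z + cinner y z"
    and cinner_scaleC_left: "cinner (scaleC r x) y = cnj r * cinner x y"
    and cinner_real: "Im (cinner x x) = 0"
    and cinner_ge_zero: "0 \<le> Re (cinner x x)"
    and cinner_eq_zero_iff: "cinner x x = 0 \<longleftrightarrow> x = 0"
    and norm_eq_sqrt_cinner: "norm x = sqrt (Re (cinner x x))"

text \<open>A complex Hilbert space is a type of sort {complex_inner, complete_space}.\<close>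

definition bounded_op :: "('h::complex_inner \<Rightarrow> 'h) \<Rightarrow> bool" where
  "bounded_op T \<longleftrightarrow>
     (\<forall>x y. T (x + y) = T x + T y) \<and>
     (\<forall>c x. T (scaleC c x) = scaleC c (T x)) \<and>
     (\<exists>K. \<forall>x. norm (T x) \<le> K * norm x)"

definition adj :: "('h::complex_inner \<Rightarrow> 'h) \<Rightarrow> ('h \<Rightarrow> 'h)" where
  "adj T = (THE S. \<forall>x y. cinner (T x) y = cinner x (S y))"

definition op_spectrum :: "('h::complex_inner \<Rightarrow> 'h) \<Rightarrow> complex set" where
  "op_spectrum T = {z. \<not> (\<exists>S. bounded_op S \<and>
        S \<circ> (\<lambda>x. scaleC z x - T x) = id \<and> (\<lambda>x. scaleC z x - T x) \<circ> S = id)}"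

definition star_subalgebra :: "('h::complex_inner \<Rightarrow> 'h) set \<Rightarrow> bool" where
  "star_subalgebra A \<longleftrightarrow>
     (\<forall>T\<in>A. bounded_op T) \<and>
     (\<lambda>x. 0) \<in> A \<and>
     (\<forall>S\<in>A. \<forall>T\<in>A. (\<lambda>x. S x + T x) \<in> A \<and> S \<circ> T \<in> A) \<and>
     (\<forall>c. \<forall>T\<in>A. (\<lambda>x. scaleC c (T x)) \<in> A) \<and>
     (\<forall>T\<in>A. adj T \<in> A)"

definition R_star_algebra :: "('h::complex_inner \<Rightarrow> 'h) set \<Rightarrow> bool" where
  "R_star_algebra A \<longleftrightarrow> star_subalgebra A \<and>
     (\<forall>T\<in>A. adj T = T \<longrightarrow> finite (op_spectrum T))"

definition is_projection :: "('h::complex_inner \<Rightarrow> 'h) set \<Rightarrow> ('h \<Rightarrow> 'h) \<Rightarrow> bool" where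
  "is_projection A p \<longleftrightarrow> p \<in> A \<and> p \<circ> p = p \<and> adj p = p"

definition proj_le :: "('h \<Rightarrow> 'h) \<Rightarrow> ('h \<Rightarrow> 'h) \<Rightarrow> bool" where
  "proj_le p q \<longleftrightarrow> p \<circ> q = p"

definition proj_less :: "('h \<Rightarrow> 'h) \<Rightarrow> ('h \<Rightarrow> 'h) \<Rightarrow> bool" where
  "proj_less p q \<longleftrightarrow> proj_le p q \<and> p \<noteq> q"

definition finite_dim_alg :: "('h::complex_inner \<Rightarrow> 'h) set \<Rightarrow> bool" where
  "finite_dim_alg A \<longleftrightarrow> (\<exists>B. finite B \<and> B \<subseteq> A \<and>
     (\<forall>T\<in>A. \<exists>c. T = (\<lambda>x. \<Sum>b\<in>B. scaleC (c b) (b x))))"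

end

theory Submission
  imports Defs "HOL-Computational_Algebra.Fundamental_Theorem_Algebra"
begin

lemma scaleC_zero_left [simp]: "scaleC 0 (x::'a::complex_vector) = 0"
proof -
  have "scaleC 0 x = scaleC 0 x + scaleC 0 x" by (metis add_0 scaleC_add_left)
  then show ?thesis by simp
qed

lemma scaleC_zero_right [simp]: "scaleC a (0::'a::complex_vector) = 0"
proof -
  have "scaleC a (0::'a) = scaleC a 0 + scaleC a 0" by (metis add_0 scaleC_add_right)
  then show ?thesis by simp
qed

lemma scaleC_minus_left: "scaleC (-a) (x::'a::complex_vector) = - scaleC a x"
proof -
  have "scaleC (-a) x + scaleC a x = 0" by (metis scaleC_add_left add.left_inverse scaleC_zero_left)
  then show ?thesis by (simp add: eq_neg_iff_add_eq_0)
qed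

lemma scaleC_minus_right: "scaleC a (- x::'a::complex_vector) = - scaleC a x"
proof -
  have "scaleC a (-x) + scaleC a x = 0" by (metis scaleC_add_right add.left_inverse scaleC_zero_right)
  then show ?thesis by (simp add: eq_neg_iff_add_eq_0)
qed

lemma scaleC_diff_right: "scaleC a (x - y::'a::complex_vector) = scaleC a x - scaleC a y"
  by (metis diff_conv_add_uminus scaleC_add_right scaleC_minus_right)

lemma scaleC_diff_left: "scaleC (a - b) (x::'a::complex_vector) = scaleC a x - scaleC b x"
  by (metis diff_conv_add_uminus scaleC_add_left scaleC_minus_left)

lemma scaleC_of_real: "scaleC (complex_of_real r) (x::'a::complex_vector) = scaleR r x"
  by (simp add: scaleR_scaleC)

lemma scaleC_eq_0_iff: "scaleC a (x::'a::complex_vector) = 0 \<longleftrightarrow> a = 0 \<or> x = 0"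
proof
  assume h: "scaleC a x = 0"
  show "a = 0 \<or> x = 0"
  proof (cases "a = 0")
    case False
    have "x = scaleC (inverse a) (scaleC a x)" using False by (simp add: scaleC_scaleC scaleC_one)
    then show ?thesis using h by simp
  qed simp
qed auto

lemma cinner_zero_left [simp]: "cinner 0 (y::'a::complex_inner) = 0"
  by (metis add_0 add_cancel_right_left cinner_add_left)

lemma cinner_zero_right [simp]: "cinner (y::'a::complex_inner) 0 = 0"
  by (metis cinner_commute cinner_zero_left complex_cnj_zero)

lemma cinner_add_right: "cinner (x::'a::complex_inner) (y + z) = cinner x y + cinner x z"
  by (metis cinner_add_left cinner_commute complex_cnj_add)

lemma cinner_scaleC_right: "cinner (x::'a::complex_inner) (scaleC r y) = r * cinner x y"
  by (metis cinner_commute cinner_scaleC_left complex_cnj_cnj complex_cnj_mult)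

lemma cinner_minus_left: "cinner (- x::'a::complex_inner) y = - cinner x y"
  by (metis add.left_inverse add_eq_0_iff cinner_add_left cinner_zero_left)

lemma cinner_minus_right: "cinner (x::'a::complex_inner) (- y) = - cinner x y"
  by (metis cinner_commute cinner_minus_left complex_cnj_minus)

lemma cinner_diff_left: "cinner (x - z::'a::complex_inner) y = cinner x y - cinner z y"
  using cinner_add_left[of x "-z" y] cinner_minus_left[of z y] by simp

lemma cinner_diff_right: "cinner (x::'a::complex_inner) (y - z) = cinner x y - cinner x z"
  using cinner_add_right[of x y "-z"] cinner_minus_right[of x z] by simp

lemma cinner_self: "cinner (x::'a::complex_inner) x = complex_of_real ((norm x)^2)"
proof -
  have "(norm x)^2 = Re (cinner x x)" using norm_eq_sqrt_cinner[of x] cinner_ge_zero[of x] by simp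
  then show ?thesis using cinner_real[of x] by (simp add: complex_eq_iff)
qed

lemma Re_cinner_self: "Re (cinner (x::'a::complex_inner) x) = (norm x)^2"
  by (simp add: cinner_self)

lemma cinner_scaleC_both: "cinner (scaleC c (x::'a::complex_inner)) (scaleC c x) = complex_of_real ((cmod c)^2 * (norm x)^2)"
proof -
  have "cinner (scaleC c x) (scaleC c x) = (c * cnj c) * cinner x x"
    by (simp only: cinner_scaleC_left cinner_scaleC_right mult_ac)
  also have "\<dots> = complex_of_real ((cmod c)^2) * complex_of_real ((norm x)^2)"
    by (simp only: complex_norm_square cinner_self)
  finally show ?thesis by simp
qed

lemma norm_scaleC: "norm (scaleC c (x::'a::complex_inner)) = cmod c * norm x"
proof -
  have "(norm (scaleC c x))^2 = Re (cinner (scaleC c x) (scaleC c x))" by (simp only: Re_cinner_self)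
  also have "\<dots> = (cmod c * norm x)^2" by (simp only: cinner_scaleC_both Re_complex_of_real power_mult_distrib)
  finally show ?thesis by (simp add: power2_eq_iff_nonneg)
qed

lemma real_cs_aux:
  fixes a b n :: real
  assumes "n > 0" "(a / n^2)^2 * n^2 \<le> b^2" "a \<ge> 0" "b \<ge> 0"
  shows "a \<le> b * n"
proof -
  have "(a / n^2)^2 * n^2 = a^2 / n^2" using assms(1) by (simp add: power2_eq_square field_simps)
  then have "a^2 / n^2 \<le> b^2" using assms(2) by simp
  then have "a^2 \<le> b^2 * n^2" using assms(1) by (simp add: field_simps)
  then have "a^2 \<le> (b*n)^2" by (simp add: power_mult_distrib)
  then show ?thesis using assms by (simp add: power2_le_iff_abs_le)
qed

lemma cinner_cauchy_schwarz: "cmod (cinner (x::'a::complex_inner) y) \<le> norm x * norm y"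
proof (cases "y = 0")
  case True then show ?thesis by simp
next
  case False
  define t where "t = cinner y x / cinner y y"
  have yy: "cinner y y = complex_of_real ((norm y)^2)" by (rule cinner_self)
  have ny: "norm y > 0" using False by simp
  define z where "z = x - scaleC t y"
  have "cinner y z = cinner y x - t * cinner y y" by (simp only: z_def cinner_diff_right cinner_scaleC_right)
  also have "\<dots> = 0" using ny by (simp add: t_def yy)
  finally have yz: "cinner y z = 0" .
  have zy: "cinner z y = 0" using yz by (metis cinner_commute complex_cnj_zero)
  have xz: "x = z + scaleC t y" by (simp add: z_def)
  have "cinner x x = cinner z z + t * cinner z y + (cnj t * cinner y z + cnj t * (t * cinner y y))"
    unfolding xz by (simp only: cinner_add_left cinner_add_right cinner_scaleC_left cinner_scaleC_right) (simp add: algebra_simps)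
  also have "\<dots> = cinner z z + (t * cnj t) * cinner y y" by (simp add: yz zy)
  also have "\<dots> = cinner z z + complex_of_real ((cmod t)^2 * (norm y)^2)"
    by (simp only: complex_norm_square yy of_real_mult)
  finally have "Re (cinner x x) = Re (cinner z z) + (cmod t)^2 * (norm y)^2" by simp
  then have le: "(cmod t)^2 * (norm y)^2 \<le> (norm x)^2" using cinner_ge_zero[of z] by (simp add: Re_cinner_self)
  have "cmod (cinner y x) = cmod (cinner x y)" by (metis cinner_commute complex_mod_cnj)
  then have "cmod t = cmod (cinner x y) / (norm y)^2"
    unfolding t_def yy by (simp add: norm_divide norm_power)
  then have "(cmod (cinner x y) / (norm y)^2)^2 * (norm y)^2 \<le> (norm x)^2" using le by simp
  then show ?thesis by (rule real_cs_aux[OF ny]) auto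
qed


lemma norm_sq_add: "(norm (x + y::'a::complex_inner))^2 = (norm x)^2 + (norm y)^2 + 2 * Re (cinner x y)"
proof -
  have "cinner (x + y) (x + y) = cinner x x + cinner y y + (cinner x y + cinner y x)"
    by (simp add: cinner_add_left cinner_add_right algebra_simps)
  moreover have "Re (cinner y x) = Re (cinner x y)" by (metis cinner_commute complex_cnj_cnj cnj.simps(1))
  ultimately show ?thesis by (simp add: Re_cinner_self[symmetric])
qed

lemma norm_sq_diff: "(norm (x - y::'a::complex_inner))^2 = (norm x)^2 + (norm y)^2 - 2 * Re (cinner x y)"
  using norm_sq_add[of x "-y"] by (simp add: cinner_minus_right)

lemma parallelogram: "(norm (x + y::'a::complex_inner))^2 + (norm (x - y))^2 = 2 * (norm x)^2 + 2 * (norm y)^2"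
  using norm_sq_add[of x y] norm_sq_diff[of x y] by simp

lemma cinner_ext: "(\<And>x. cinner x a = cinner x (b::'a::complex_inner)) \<Longrightarrow> a = b"
proof -
  assume h: "\<And>x. cinner x a = cinner x b"
  have "cinner (a - b) (a - b) = 0" using h[of "a - b"] by (simp add: cinner_diff_right)
  then show "a = b" by (simp add: cinner_eq_zero_iff)
qed

lemma orth_min:
  fixes u x :: "'a::complex_inner"
  assumes h: "\<And>t. norm u \<le> norm (u + scaleC t x)"
  shows "cinner u x = 0"
proof (rule ccontr)
  define c where "c = cinner u x"
  assume "cinner u x \<noteq> 0"
  then have c0: "c \<noteq> 0" by (simp add: c_def)
  then have cp: "(cmod c)^2 > 0" by simp
  define s :: real where "s = 1 / ((norm x)^2 + 1)"
  have np: "(norm x)^2 + 1 > 0" using zero_le_power2[of "norm x"] by linarith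
  have s0: "s > 0" using np by (simp add: s_def)
  have "s * (norm x)^2 < 1" unfolding s_def using np by (simp add: field_simps)
  then have sx: "s * (norm x)^2 < 2" by simp
  define t where "t = - complex_of_real s * cnj c"
  have "(norm u)^2 \<le> (norm (u + scaleC t x))^2" using h[of t] by (simp add: power_mono)
  also have "\<dots> = (norm u)^2 + (cmod t)^2 * (norm x)^2 + 2 * Re (t * c)"
    by (simp add: norm_sq_add norm_scaleC cinner_scaleC_right c_def power_mult_distrib)
  also have "Re (t * c) = - s * (cmod c)^2"
  proof -
    have "t * c = - (complex_of_real s * (c * cnj c))" by (simp add: t_def mult_ac)
    also have "\<dots> = - complex_of_real (s * (cmod c)^2)" by (simp only: complex_norm_square[symmetric] of_real_mult)
    finally show ?thesis by simp
  qed
  also have "(cmod t)^2 = s^2 * (cmod c)^2"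
    by (simp add: t_def norm_mult power_mult_distrib abs_of_pos s0)
  finally have "0 \<le> (cmod c)^2 * s * (s * (norm x)^2 - 2)" by (simp add: algebra_simps power2_eq_square)
  moreover have "(cmod c)^2 * s * (s * (norm x)^2 - 2) < 0"
    using cp s0 sx by (simp add: mult_pos_neg)
  ultimately show False by simp
qed


lemma riesz:
  fixes f :: "'a::{complex_inner,complete_space} \<Rightarrow> complex"
  assumes add: "\<And>x y. f (x + y) = f x + f y"
    and hom: "\<And>c x. f (scaleC c x) = c * f x"
    and bnd: "\<And>x. cmod (f x) \<le> K * norm x"
  shows "\<exists>w. \<forall>x. f x = cinner w x"
proof (cases "\<forall>x. f x = 0")
  case True then show ?thesis by (intro exI[of _ 0]) simp
next
  case False
  then obtain x0 where fx0: "f x0 \<noteq> 0" by blast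
  have f0: "f 0 = 0" using hom[of 0 0] by simp
  have rot: "\<exists>v. norm v = 1 \<and> f v = complex_of_real (cmod (f x) / norm x)" if fx: "f x \<noteq> 0" for x
  proof -
    have x0: "x \<noteq> 0" using fx f0 by auto
    then have nx: "norm x > 0" by simp
    define v where "v = scaleC (cnj (f x) / complex_of_real (cmod (f x) * norm x)) x"
    have "f v = (f x * cnj (f x)) / complex_of_real (cmod (f x) * norm x)"
      by (simp add: v_def hom)
    also have "\<dots> = complex_of_real ((cmod (f x))^2) / complex_of_real (cmod (f x) * norm x)"
      by (simp only: complex_norm_square)
    also have "\<dots> = complex_of_real (cmod (f x) / norm x)"
      using fx nx by (simp add: power2_eq_square)
    finally have 1: "f v = complex_of_real (cmod (f x) / norm x)" .
    have "norm v = cmod (f x) / (cmod (f x) * norm x) * norm x"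
      by (simp add: v_def norm_scaleC norm_divide norm_mult)
    also have "\<dots> = 1" using fx nx by simp
    finally show ?thesis using 1 by blast
  qed
  define S where "S = (\<lambda>x. Re (f x)) ` {x. norm x \<le> 1}"
  have "(0::'a) \<in> {x. norm x \<le> 1}" by simp
  then have Sne: "S \<noteq> {}" unfolding S_def by blast
  have Sbdd: "bdd_above S"
  proof (rule bdd_aboveI)
    fix r assume "r \<in> S"
    then obtain x where x: "norm x \<le> 1" "r = Re (f x)" unfolding S_def by auto
    have "r \<le> cmod (f x)" using x(2) complex_Re_le_cmod by simp
    also have "\<dots> \<le> K * norm x" by (rule bnd)
    also have "\<dots> \<le> max K 0 * 1" using x(1) by (intro mult_mono) auto
    finally show "r \<le> max K 0" by simp
  qed
  define N where "N = Sup S"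
  have upper: "Re (f x) \<le> N" if "norm x \<le> 1" for x
    unfolding N_def by (rule cSup_upper[OF _ Sbdd]) (use that in \<open>auto simp: S_def\<close>)
  have N0: "0 \<le> N" using upper[of 0] f0 by simp
  have fbound: "cmod (f x) \<le> N * norm x" for x
  proof (cases "f x = 0")
    case True then show ?thesis using N0 by simp
  next
    case False
    then obtain v where v: "norm v = 1" "f v = complex_of_real (cmod (f x) / norm x)" using rot by blast
    have nx: "norm x > 0" using False f0 by (cases "x = 0") auto
    have "cmod (f x) / norm x \<le> N" using upper[of v] v by simp
    then show ?thesis using nx by (simp add: field_simps)
  qed
  have Npos: "N > 0"
  proof -
    have "0 < cmod (f x0)" using fx0 by simp
    also have "\<dots> \<le> N * norm x0" by (rule fbound)
    finally show ?thesis using N0 by (cases "N = 0") auto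
  qed
  have "\<forall>n. \<exists>x. norm x \<le> 1 \<and> N - inverse (real (Suc n)) < Re (f x)"
  proof
    fix n
    have "N - inverse (real (Suc n)) < N" by simp
    then obtain r where "r \<in> S" "N - inverse (real (Suc n)) < r"
      unfolding N_def using less_cSup_iff[OF Sne Sbdd] by blast
    then show "\<exists>x. norm x \<le> 1 \<and> N - inverse (real (Suc n)) < Re (f x)" unfolding S_def by auto
  qed
  then obtain xs where xs1: "\<And>n. norm (xs n) \<le> 1" and xs2: "\<And>n. N - inverse (real (Suc n)) < Re (f (xs n))"
    by metis
  have "Cauchy xs"
  proof (rule CauchyI)
    fix e :: real assume e: "e > 0"
    have "min (N/2) (e^2 * N / 8) > 0" using e Npos by simp
    then obtain M where M: "inverse (real (Suc M)) < min (N/2) (e^2 * N / 8)"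
      using reals_Archimedean by blast
    define d where "d = inverse (real (Suc M))"
    have d0: "d > 0" by (simp add: d_def)
    have dN: "d < N/2" and de: "d < e^2 * N / 8" using M by (auto simp: d_def)
    show "\<exists>M. \<forall>m\<ge>M. \<forall>n\<ge>M. norm (xs m - xs n) < e"
    proof (intro exI allI impI)
      fix m n assume m: "m \<ge> M" and n: "n \<ge> M"
      have im: "inverse (real (Suc m)) \<le> d" unfolding d_def using m by (simp add: field_simps)
      have inn: "inverse (real (Suc n)) \<le> d" unfolding d_def using n by (simp add: field_simps)
      have "2 * N - 2 * d < Re (f (xs m + xs n))" using xs2[of m] xs2[of n] im inn by (simp add: add)
      also have "\<dots> \<le> cmod (f (xs m + xs n))" by (rule complex_Re_le_cmod)
      also have "\<dots> \<le> N * norm (xs m + xs n)" by (rule fbound)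
      finally have "2 * N - 2 * d < N * norm (xs m + xs n)" .
      then have a: "2 - 2 * d / N < norm (xs m + xs n)" using Npos by (simp add: field_simps)
      define ep where "ep = 2 * d / N"
      have ep0: "0 < ep" "ep < 1" using d0 dN Npos by (auto simp: ep_def field_simps)
      have "(2 - ep)^2 < (norm (xs m + xs n))^2" using a ep0 by (intro power_strict_mono) (auto simp: ep_def)
      moreover have "(2 - ep)^2 = 4 - 4 * ep + ep^2" by (simp add: power2_eq_square algebra_simps)
      ultimately have a2: "4 - 4 * ep < (norm (xs m + xs n))^2" using ep0 by (smt (verit) zero_le_power2)
      have "(norm (xs m))^2 \<le> 1" "(norm (xs n))^2 \<le> 1" using xs1[of m] xs1[of n]
        by (simp_all add: power_le_one)
      then have "(norm (xs m - xs n))^2 < 4 * ep" using parallelogram[of "xs m" "xs n"] a2 by linarith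
      also have "4 * ep < e^2" using de Npos by (simp add: ep_def field_simps)
      finally show "norm (xs m - xs n) < e" using e by (simp add: power_less_imp_less_base)
    qed
  qed
  then obtain u where u: "xs \<longlonglongrightarrow> u" using Cauchy_convergent_iff convergent_def by blast
  have nu: "norm u \<le> 1"
    using LIMSEQ_le_const2[OF tendsto_norm[OF u]] xs1 by blast
  have "(\<lambda>n. f (xs n) - f u) \<longlonglongrightarrow> 0"
  proof (rule Lim_null_comparison)
    show "\<forall>\<^sub>F n in sequentially. norm (f (xs n) - f u) \<le> max K 0 * norm (xs n - u)"
    proof (rule always_eventually, rule allI)
      fix n
      have "f (xs n) - f u = f (xs n - u)" using add[of "xs n - u" u] by simp
      then have "norm (f (xs n) - f u) \<le> K * norm (xs n - u)" using bnd by simp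
      also have "\<dots> \<le> max K 0 * norm (xs n - u)" by (intro mult_right_mono) auto
      finally show "norm (f (xs n) - f u) \<le> max K 0 * norm (xs n - u)" .
    qed
    have "(\<lambda>n. xs n - u) \<longlonglongrightarrow> 0" using u by (simp add: LIM_zero)
    then have "(\<lambda>n. norm (xs n - u)) \<longlonglongrightarrow> 0" by (simp add: tendsto_norm_zero)
    then show "(\<lambda>n. max K 0 * norm (xs n - u)) \<longlonglongrightarrow> 0" by (simp add: tendsto_mult_right_zero)
  qed
  then have fu: "(\<lambda>n. f (xs n)) \<longlonglongrightarrow> f u" by (simp add: LIM_zero_cancel)
  have Refu: "Re (f u) = N"
  proof (rule antisym)
    show "Re (f u) \<le> N" using upper[OF nu] .
    have "(\<lambda>n. N - inverse (real (Suc n))) \<longlonglongrightarrow> N - 0"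
      by (intro tendsto_diff tendsto_const LIMSEQ_inverse_real_of_nat)
    moreover have "\<exists>M. \<forall>n\<ge>M. N - inverse (real (Suc n)) \<le> Re (f (xs n))"
      using xs2 less_imp_le by blast
    ultimately have "N - 0 \<le> Re (f u)" by (rule LIMSEQ_le[OF _ tendsto_Re[OF fu]])
    then show "N \<le> Re (f u)" by simp
  qed
  have orth: "cinner u x = 0" if fx: "f x = 0" for x
  proof (rule orth_min)
    fix t
    have "N = Re (f (u + scaleC t x))" using Refu by (simp add: add hom fx)
    also have "\<dots> \<le> cmod (f (u + scaleC t x))" by (rule complex_Re_le_cmod)
    also have "\<dots> \<le> N * norm (u + scaleC t x)" by (rule fbound)
    finally have "1 \<le> norm (u + scaleC t x)" using Npos by simp
    then show "norm u \<le> norm (u + scaleC t x)" using nu by linarith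
  qed
  have fu0: "f u \<noteq> 0" using Refu Npos by auto
  have u0: "u \<noteq> 0" using fu0 f0 by auto
  have uu: "cinner u u \<noteq> 0" using u0 by (simp add: cinner_eq_zero_iff)
  show ?thesis
  proof (intro exI allI)
    fix x
    define y where "y = x - scaleC (f x / f u) u"
    have "f y = 0"
    proof -
      have "f x = f y + f (scaleC (f x / f u) u)" using add[of y "scaleC (f x / f u) u"] by (simp add: y_def)
      then show ?thesis using fu0 by (simp add: hom)
    qed
    then have "cinner u y = 0" by (rule orth)
    then have "cinner u x = (f x / f u) * cinner u u" by (simp add: y_def cinner_diff_right cinner_scaleC_right)
    then have "f x = f u / cinner u u * cinner u x" using fu0 uu by (simp add: field_simps)
    also have "\<dots> = cinner (scaleC (cnj (f u / cinner u u)) u) x" by (simp add: cinner_scaleC_left)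
    finally show "f x = cinner (scaleC (cnj (f u / cinner u u)) u) x" .
  qed
qed


lemma bop_add: "bounded_op T \<Longrightarrow> T (x + y) = T x + T y"
  unfolding bounded_op_def by blast
lemma bop_scaleC: "bounded_op T \<Longrightarrow> T (scaleC c x) = scaleC c (T x)"
  unfolding bounded_op_def by blast
lemma bop_zero: "bounded_op T \<Longrightarrow> T 0 = 0"
  using bop_scaleC[of T 0 0] by simp
lemma scaleC_m1: "scaleC (-1) (x::'a::complex_vector) = - x"
  by (simp add: scaleC_minus_left scaleC_one)
lemma bop_minus: "bounded_op T \<Longrightarrow> T (- x) = - T x"
  using bop_scaleC[of T "-1" x] by (simp add: scaleC_m1)
lemma bop_diff: "bounded_op T \<Longrightarrow> T (x - y) = T x - T y"
  using bop_add[of T x "-y"] bop_minus[of T y] by simp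
lemma bop_bound: "bounded_op T \<Longrightarrow> \<exists>K\<ge>0. \<forall>x. norm (T x) \<le> K * norm x"
proof -
  assume "bounded_op T"
  then obtain K where K: "\<And>x. norm (T x) \<le> K * norm x" unfolding bounded_op_def by blast
  have "norm (T x) \<le> max K 0 * norm x" for x
    using K[of x] by (smt (verit) mult_right_mono norm_ge_zero)
  then show ?thesis by (intro exI[of _ "max K 0"]) auto
qed

lemma bounded_op_zero: "bounded_op (\<lambda>x. 0)"
  unfolding bounded_op_def by (auto intro: exI[of _ 0])
lemma bounded_op_id: "bounded_op (\<lambda>x. x)"
  unfolding bounded_op_def by (auto intro: exI[of _ 1])
lemma bounded_op_add: "bounded_op S \<Longrightarrow> bounded_op T \<Longrightarrow> bounded_op (\<lambda>x. S x + T x)"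
proof -
  assume s: "bounded_op S" and t: "bounded_op T"
  obtain K where K: "K \<ge> 0" "\<And>x. norm (S x) \<le> K * norm x" using bop_bound[OF s] by blast
  obtain L where L: "L \<ge> 0" "\<And>x. norm (T x) \<le> L * norm x" using bop_bound[OF t] by blast
  have "norm (S x + T x) \<le> (K + L) * norm x" for x
    using norm_triangle_ineq[of "S x" "T x"] K(2)[of x] L(2)[of x] by (simp add: algebra_simps)
  then show ?thesis unfolding bounded_op_def
    using bop_add[OF s] bop_add[OF t] bop_scaleC[OF s] bop_scaleC[OF t]
    by (auto simp: scaleC_add_right algebra_simps intro!: exI[of _ "K+L"])
qed
lemma bounded_op_comp: "bounded_op S \<Longrightarrow> bounded_op T \<Longrightarrow> bounded_op (\<lambda>x. S (T x))"
proof -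
  assume s: "bounded_op S" and t: "bounded_op T"
  obtain K where K: "K \<ge> 0" "\<And>x. norm (S x) \<le> K * norm x" using bop_bound[OF s] by blast
  obtain L where L: "L \<ge> 0" "\<And>x. norm (T x) \<le> L * norm x" using bop_bound[OF t] by blast
  have "norm (S (T x)) \<le> (K * L) * norm x" for x
  proof -
    have "norm (S (T x)) \<le> K * norm (T x)" by (rule K(2))
    also have "\<dots> \<le> K * (L * norm x)" using L(2)[of x] K(1) by (rule mult_left_mono)
    finally show ?thesis by simp
  qed
  then show ?thesis unfolding bounded_op_def
    using bop_add[OF s] bop_add[OF t] bop_scaleC[OF s] bop_scaleC[OF t] by auto
qed
lemma bounded_op_scal: "bounded_op (\<lambda>x. scaleC c x)"
  unfolding bounded_op_def
  by (auto simp: scaleC_add_right scaleC_scaleC mult.commute norm_scaleC intro!: exI[of _ "cmod c"])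

lemma adj_eq: "(\<And>x y. cinner (T x) y = cinner x (S y)) \<Longrightarrow> adj T = S"
  unfolding adj_def
proof (rule the_equality)
  assume h: "\<And>x y. cinner (T x) y = cinner x (S y)"
  show "\<forall>x y. cinner (T x) y = cinner x (S y)" using h by blast
  fix S' assume h': "\<forall>x y. cinner (T x) y = cinner x (S' y)"
  show "S' = S"
  proof
    fix y show "S' y = S y" using h h' by (intro cinner_ext) metis
  qed
qed

lemma adj_exists:
  fixes T :: "'a::{complex_inner,complete_space} \<Rightarrow> 'a"
  assumes t: "bounded_op T"
  shows "\<exists>S. \<forall>x y. cinner (T x) y = cinner x (S y)"
proof -
  obtain K where K: "K \<ge> 0" "\<And>x. norm (T x) \<le> K * norm x" using bop_bound[OF t] by blast
  have "\<forall>y. \<exists>w. \<forall>x. cinner y (T x) = cinner w x"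
  proof
    fix y
    show "\<exists>w. \<forall>x. cinner y (T x) = cinner w x"
    proof (rule riesz)
      show "cinner y (T (a + b)) = cinner y (T a) + cinner y (T b)" for a b
        by (simp add: bop_add[OF t] cinner_add_right)
      show "cinner y (T (scaleC c a)) = c * cinner y (T a)" for c a
        by (simp add: bop_scaleC[OF t] cinner_scaleC_right)
      show "cmod (cinner y (T a)) \<le> (norm y * K) * norm a" for a
      proof -
        have "cmod (cinner y (T a)) \<le> norm y * norm (T a)" by (rule cinner_cauchy_schwarz)
        also have "\<dots> \<le> norm y * (K * norm a)" by (intro mult_left_mono K(2)) auto
        finally show ?thesis by simp
      qed
    qed
  qed
  then obtain S where S: "\<And>y x. cinner y (T x) = cinner (S y) x" by metis
  have "cinner (T x) y = cinner x (S y)" for x y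
    by (metis S cinner_commute)
  then show ?thesis by blast
qed

lemma adj_prop:
  fixes T :: "'a::{complex_inner,complete_space} \<Rightarrow> 'a"
  assumes t: "bounded_op T"
  shows "cinner (T x) y = cinner x (adj T y)"
proof -
  obtain S where S: "\<And>x y. cinner (T x) y = cinner x (S y)" using adj_exists[OF t] by blast
  then have "adj T = S" by (rule adj_eq)
  then show ?thesis using S by simp
qed

lemma bounded_adj:
  fixes T :: "'a::{complex_inner,complete_space} \<Rightarrow> 'a"
  assumes t: "bounded_op T"
  shows "bounded_op (adj T)"
proof -
  have P: "\<And>x y. cinner (T x) y = cinner x (adj T y)" by (rule adj_prop[OF t])
  obtain K where K: "K \<ge> 0" "\<And>x. norm (T x) \<le> K * norm x" using bop_bound[OF t] by blast
  have add: "adj T (x + y) = adj T x + adj T y" for x y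
    by (rule cinner_ext[symmetric]) (simp add: P[symmetric] cinner_add_right)
  have sc: "adj T (scaleC c x) = scaleC c (adj T x)" for c x
    by (rule cinner_ext[symmetric]) (simp add: P[symmetric] cinner_scaleC_right)
  have bd: "norm (adj T y) \<le> K * norm y" for y
  proof (cases "adj T y = 0")
    case True then show ?thesis using K by simp
  next
    case False
    have "(norm (adj T y))^2 = Re (cinner (adj T y) (adj T y))" by (simp add: Re_cinner_self)
    also have "\<dots> = Re (cinner (T (adj T y)) y)" by (simp add: P)
    also have "\<dots> \<le> cmod (cinner (T (adj T y)) y)" by (rule complex_Re_le_cmod)
    also have "\<dots> \<le> norm (T (adj T y)) * norm y" by (rule cinner_cauchy_schwarz)
    also have "\<dots> \<le> (K * norm (adj T y)) * norm y" by (intro mult_right_mono K(2)) auto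
    finally have "norm (adj T y) * norm (adj T y) \<le> norm (adj T y) * (K * norm y)"
      by (simp add: power2_eq_square mult_ac)
    then show ?thesis using False by simp
  qed
  show ?thesis unfolding bounded_op_def using add sc bd by blast
qed


typedef (overloaded) 'a bop = "{T :: 'a::complex_inner \<Rightarrow> 'a. bounded_op T}" morphisms app Abs_bop
  using bounded_op_zero by blast

setup_lifting type_definition_bop

lemma bounded_op_uminus: "bounded_op T \<Longrightarrow> bounded_op (\<lambda>x. - T x)"
  using bounded_op_comp[OF bounded_op_scal[of "-1"]] by (simp add: scaleC_m1)

lemma bounded_op_diff: "bounded_op S \<Longrightarrow> bounded_op T \<Longrightarrow> bounded_op (\<lambda>x. S x - T x)"
  using bounded_op_add[of S "\<lambda>x. - T x"] bounded_op_uminus[of T] by simp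

instantiation bop :: (complex_inner) "{ring, monoid_mult}"
begin
lift_definition zero_bop :: "'a bop" is "\<lambda>x. 0" by (rule bounded_op_zero)
lift_definition one_bop :: "'a bop" is "\<lambda>x. x" by (rule bounded_op_id)
lift_definition plus_bop :: "'a bop \<Rightarrow> 'a bop \<Rightarrow> 'a bop" is "\<lambda>S T x. S x + T x" by (rule bounded_op_add)
lift_definition minus_bop :: "'a bop \<Rightarrow> 'a bop \<Rightarrow> 'a bop" is "\<lambda>S T x. S x - T x" by (rule bounded_op_diff)
lift_definition uminus_bop :: "'a bop \<Rightarrow> 'a bop" is "\<lambda>T x. - T x" by (rule bounded_op_uminus)
lift_definition times_bop :: "'a bop \<Rightarrow> 'a bop \<Rightarrow> 'a bop" is "\<lambda>S T x. S (T x)" by (rule bounded_op_comp)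
instance
proof
  fix a b c :: "'a bop"
  show "a + b + c = a + (b + c)" by transfer (simp add: add.assoc)
  show "a + b = b + a" by transfer (simp add: add.commute)
  show "0 + a = a" by transfer simp
  show "- a + a = 0" by transfer simp
  show "a - b = a + - b" by transfer simp
  show "a * b * c = a * (b * c)" by transfer simp
  show "(a + b) * c = a * c + b * c" by transfer simp
  show "a * (b + c) = a * b + a * c" by transfer (simp add: bop_add)
  show "1 * a = a" by transfer simp
  show "a * 1 = a" by transfer simp
qed
end

lemma app_zero [simp]: "app 0 x = 0" by transfer simp
lemma app_one [simp]: "app 1 x = x" by transfer simp
lemma app_plus [simp]: "app (S + T) x = app S x + app T x" by transfer simp
lemma app_minus [simp]: "app (S - T) x = app S x - app T x" by transfer simp
lemma app_uminus [simp]: "app (- T) x = - app T x" by transfer simp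
lemma app_times [simp]: "app (S * T) x = app S (app T x)" by transfer simp
lemma app_bounded: "bounded_op (app T)" using app by blast
lemma app_add: "app T (x + y) = app T x + app T y" by (rule bop_add[OF app_bounded])
lemma app_scaleC: "app T (scaleC c x) = scaleC c (app T x)" by (rule bop_scaleC[OF app_bounded])
lemma app_0 [simp]: "app T 0 = 0" by (rule bop_zero[OF app_bounded])
lemma app_diff: "app T (x - y) = app T x - app T y" by (rule bop_diff[OF app_bounded])
lemma app_neg: "app T (- x) = - app T x" by (rule bop_minus[OF app_bounded])
lemma bop_eqI: "(\<And>x. app S x = app T x) \<Longrightarrow> S = T" by (metis app_inject ext)

lift_definition scal :: "complex \<Rightarrow> 'a::complex_inner bop" is "\<lambda>c x. scaleC c x" by (rule bounded_op_scal)
lemma app_scal [simp]: "app (scal c) x = scaleC c x" by transfer simp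

lemma scal_add: "scal (a + b) = scal a + scal b" by transfer (simp add: fun_eq_iff scaleC_add_left)
lemma scal_mult: "scal (a * b) = scal a * scal b" by transfer (simp add: fun_eq_iff scaleC_scaleC)
lemma scal_one [simp]: "scal 1 = 1" by transfer (simp add: fun_eq_iff scaleC_one)
lemma scal_zero [simp]: "scal 0 = 0" by transfer (simp add: fun_eq_iff)
lemma scal_minus: "scal (- a) = - scal a" by transfer (simp add: fun_eq_iff scaleC_minus_left)
lemma scal_diff: "scal (a - b) = scal a - scal b" by transfer (simp add: fun_eq_iff scaleC_diff_left)
lemma scal_commute: "scal c * T = T * scal c" by (rule bop_eqI) (simp add: app_scaleC)
lemma scal_assoc: "scal a * (scal b * T) = scal (a * b) * T" by (simp add: scal_mult mult.assoc)
lemma scal_cancel: "scal c * T = 0 \<Longrightarrow> c \<noteq> 0 \<Longrightarrow> T = 0"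
proof -
  assume h: "scal c * T = 0" "c \<noteq> 0"
  have "T = scal (inverse c) * (scal c * T)" using h(2) by (simp add: scal_assoc)
  then show "T = 0" using h(1) by simp
qed

lift_definition star :: "'a::{complex_inner,complete_space} bop \<Rightarrow> 'a bop" is adj by (rule bounded_adj)

lemma star_prop: "cinner (app T x) y = cinner x (app (star T) y)"
  by transfer (rule adj_prop)

lemma star_eq: "(\<And>x y. cinner (app T x) y = cinner x (app S y)) \<Longrightarrow> star T = S"
  by (rule bop_eqI, rule cinner_ext) (metis star_prop)

lemma star_star [simp]: "star (star T) = T"
proof (rule star_eq)
  fix x y show "cinner (app (star T) x) y = cinner x (app T y)"
    by (metis star_prop cinner_commute)
qed

lemma star_add: "star (S + T) = star S + star T"
  by (rule star_eq) (simp add: cinner_add_left cinner_add_right star_prop)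
lemma star_mult: "star (S * T) = star T * star S"
  by (rule star_eq) (simp add: star_prop)
lemma star_scal: "star (scal c) = scal (cnj c)"
  by (rule star_eq) (simp add: cinner_scaleC_left cinner_scaleC_right)
lemma star_zero [simp]: "star 0 = 0"
  by (rule star_eq) simp
lemma star_one [simp]: "star 1 = 1"
  by (rule star_eq) simp
lemma star_uminus: "star (- T) = - star T"
  by (rule star_eq) (simp add: cinner_minus_left cinner_minus_right star_prop)
lemma star_diff: "star (S - T) = star S - star T"
  by (rule star_eq) (simp add: cinner_diff_left cinner_diff_right star_prop)
lemma star_scal_mult: "star (scal c * T) = scal (cnj c) * star T"
  by (simp add: star_mult star_scal scal_commute)

lemma star_self_zero: "star X * X = 0 \<Longrightarrow> X = (0::'a::{complex_inner,complete_space} bop)"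
proof -
  assume h: "star X * X = 0"
  have "cinner (app X x) (app X x) = 0" for x
    using star_prop[of X x "app X x"] h by (metis app_times app_zero cinner_commute cinner_zero_left complex_cnj_zero)
  then show ?thesis by (intro bop_eqI) (simp add: cinner_eq_zero_iff)
qed


definition peval :: "complex poly \<Rightarrow> 'a::complex_inner bop \<Rightarrow> 'a bop" where
  "peval p X = fold_coeffs (\<lambda>a r. scal a + X * r) p 0"

lemma peval_0 [simp]: "peval 0 X = 0"
  by (simp add: peval_def)

lemma peval_pCons [simp]: "peval (pCons a p) X = scal a + X * peval p X"
proof (cases "p = 0 \<and> a = 0")
  case True then show ?thesis by (simp add: peval_def)
next
  case False
  then have "fold_coeffs (\<lambda>a r. scal a + X * r) (pCons a p) = (\<lambda>r. scal a + X * r) \<circ> fold_coeffs (\<lambda>a r. scal a + X * r) p"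
    by (cases "a = 0") auto
  then show ?thesis by (simp add: peval_def)
qed

lemma peval_const [simp]: "peval [:c:] X = scal c"
  by simp

lemma peval_add: "peval (p + q) X = peval p X + peval q X"
proof (induct p arbitrary: q)
  case 0 then show ?case by simp
next
  case (pCons a p)
  obtain b q' where q: "q = pCons b q'" by (cases q) auto
  show ?case using pCons(2)[of q'] by (simp add: q scal_add algebra_simps)
qed

lemma scal_scal_comm: "scal a * scal c = scal c * scal a"
  by (simp add: scal_mult[symmetric] mult.commute)

lemma peval_smult: "peval (smult c p) X = scal c * peval p X"
proof (induct p)
  case 0 then show ?case by simp
next
  case (pCons a p)
  have "scal c * (X * peval p X) = X * (scal c * peval p X)"
    by (metis mult.assoc scal_commute)
  then show ?case using pCons(2) by (simp add: scal_mult algebra_simps scal_scal_comm)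
qed

lemma peval_uminus: "peval (- p) X = - peval p X"
proof -
  have "- p = smult (-1) p" by simp
  then show ?thesis by (simp only: peval_smult scal_minus scal_one) simp
qed

lemma peval_diff: "peval (p - q) X = peval p X - peval q X"
  using peval_add[of p "- q" X] peval_uminus[of q X] by simp

lemma peval_mult: "peval (p * q) X = peval p X * peval q X"
proof (induct p)
  case 0 then show ?case by simp
next
  case (pCons a p)
  have "pCons a p * q = smult a q + pCons 0 (p * q)" by (simp add: mult_pCons_left)
  then have "peval (pCons a p * q) X = scal a * peval q X + X * (peval p X * peval q X)"
    using pCons(2) by (simp add: peval_add peval_smult)
  then show ?case by (simp add: algebra_simps)
qed

lemma peval_comm: "peval p X * peval q X = peval q X * peval p X"
  by (metis peval_mult mult.commute)

lemma peval_X_comm: "X * peval p X = peval p X * X"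
proof -
  have "peval [:0, 1:] X = X" by simp
  then show ?thesis by (metis peval_comm)
qed

lemma peval_linear: "peval [:- w, 1:] X = X - scal w"
  by (simp add: scal_minus)

lemma peval_star: "star X = X \<Longrightarrow> star (peval p X) = peval (map_poly cnj p) X"
proof (induct p)
  case 0 then show ?case by simp
next
  case (pCons a p)
  have "star (peval (pCons a p) X) = scal (cnj a) + peval (map_poly cnj p) X * X"
    using pCons by (simp add: star_add star_mult star_scal)
  also have "\<dots> = peval (map_poly cnj (pCons a p)) X"
    by (simp add: map_poly_pCons peval_X_comm)
  finally show ?case .
qed

lemma peval_eig: "X * F = scal l * F \<Longrightarrow> peval p X * F = scal (poly p l) * F"
proof (induct p)
  case 0 then show ?case by simp
next
  case (pCons a p)
  have "peval (pCons a p) X * F = scal a * F + X * (peval p X * F)" by (simp add: algebra_simps)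
  also have "\<dots> = scal a * F + X * (scal (poly p l) * F)" using pCons by simp
  also have "X * (scal (poly p l) * F) = scal (poly p l) * (X * F)" by (metis mult.assoc scal_commute)
  also have "\<dots> = scal (l * poly p l) * F" using pCons(3) by (simp add: scal_mult[symmetric] mult.assoc[symmetric] mult.commute)
  finally show ?case by (simp add: scal_add algebra_simps)
qed

definition invertible :: "'a::complex_inner bop \<Rightarrow> bool" where
  "invertible X \<longleftrightarrow> (\<exists>S. S * X = 1 \<and> X * S = 1)"

definition spec :: "'a::complex_inner bop \<Rightarrow> complex set" where
  "spec X = {z. \<not> invertible (scal z - X)}"

lemma invertible_mult: "invertible X \<Longrightarrow> invertible Y \<Longrightarrow> invertible (X * Y)"
proof -
  assume "invertible X" "invertible Y"
  then obtain S T where "S * X = 1" "X * S = 1" "T * Y = 1" "Y * T = 1" unfolding invertible_def by blast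
  then have "(T * S) * (X * Y) = 1" "(X * Y) * (T * S) = 1"
    by (metis mult.assoc mult_1_left)+
  then show ?thesis unfolding invertible_def by blast
qed

lemma invertible_uminus: "invertible X \<Longrightarrow> invertible (- X)"
  unfolding invertible_def by (metis minus_mult_minus)

lemma invertible_scal: "c \<noteq> 0 \<Longrightarrow> invertible (scal c)"
  unfolding invertible_def
  by (intro exI[of _ "scal (inverse c)"]) (simp add: scal_mult[symmetric])

lemma peval_invertible:
  "p \<noteq> 0 \<Longrightarrow> (\<And>l. l \<in> spec X \<Longrightarrow> poly p l \<noteq> 0) \<Longrightarrow> invertible (peval p X)"
proof (induct "degree p" arbitrary: p rule: less_induct)
  case less
  show ?case
  proof (cases "degree p = 0")
    case True
    then obtain c where p: "p = [:c:]" by (metis degree_eq_zeroE)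
    then have "c \<noteq> 0" using less(2) by simp
    then show ?thesis by (simp add: p invertible_scal)
  next
    case False
    then have "\<not> constant (poly p)" by (simp add: constant_degree)
    then obtain w where w: "poly p w = 0" using fundamental_theorem_of_algebra by blast
    then obtain q where pq: "p = [:- w, 1:] * q" using poly_eq_0_iff_dvd by (metis dvdE)
    have q0: "q \<noteq> 0" using less(2) pq by auto
    have "degree ([:- w, 1:] * q) = degree [:- w, 1:] + degree q" by (rule degree_mult_eq) (use q0 in auto)
    then have dq: "degree q < degree p" by (simp only: pq) simp
    have ql: "poly q l \<noteq> 0" if "l \<in> spec X" for l using less(3)[OF that] pq by auto
    have iq: "invertible (peval q X)" by (rule less(1)[OF dq q0 ql])
    have "w \<notin> spec X" using less(3) w by blast
    then have iw: "invertible (scal w - X)" by (simp add: spec_def)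
    have "peval p X = peval [:- w, 1:] X * peval q X" unfolding pq by (rule peval_mult)
    also have "\<dots> = - (scal w - X) * peval q X" by (simp only: peval_linear) simp
    finally have "peval p X = - (scal w - X) * peval q X" .
    then show ?thesis using invertible_mult[OF invertible_uminus[OF iw] iq] by simp
  qed
qed


lemma real_contra_aux:
  fixes A d :: real
  assumes "A \<ge> 0" "d > 0" "d \<le> 1 / (8 * A + 1)" "1/4 \<le> 2 * A * d"
  shows False
proof -
  have p: "8 * A + 1 > 0" using assms(1) by simp
  have "d * (8 * A + 1) \<le> 1" using assms(3) p by (simp add: field_simps)
  then have "8 * A * d + d \<le> 1" by (simp add: algebra_simps)
  then show False using assms(2,4) by linarith
qed

lemma factor_sq: "scal (c * c) - H * H = - ((scal c - H) * (scal (-c) - H))"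
proof -
  have 1: "(scal c - H) * (scal (-c) - H) = scal c * scal (-c) - scal c * H - H * scal (-c) + H * H"
    by (simp add: algebra_simps)
  have 2: "H * scal (-c) = - (scal c * H)" by (simp add: scal_commute[symmetric] scal_minus)
  have 3: "scal c * scal (-c) = - scal (c*c)" by (simp add: scal_mult[symmetric] scal_minus)
  show ?thesis unfolding 1 2 3 by (simp add: algebra_simps)
qed

lemma spec_real_nonzero:
  fixes H :: "'a::{complex_inner,complete_space} bop"
  assumes sa: "star H = H" and H0: "H \<noteq> 0"
  shows "\<exists>r::real. r \<noteq> 0 \<and> complex_of_real r \<in> spec H"
proof -
  obtain K where K: "K \<ge> 0" "\<And>x. norm (app H x) \<le> K * norm x" using bop_bound[OF app_bounded] by blast
  define S where "S = (\<lambda>x. norm (app H x)) ` {x. norm x \<le> 1}"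
  have "(0::'a) \<in> {x. norm x \<le> 1}" by simp
  then have Sne: "S \<noteq> {}" unfolding S_def by blast
  have Sbdd: "bdd_above S"
  proof (rule bdd_aboveI)
    fix r assume "r \<in> S"
    then obtain x where x: "norm x \<le> 1" "r = norm (app H x)" unfolding S_def by auto
    have "r \<le> K * norm x" using x K by simp
    also have "\<dots> \<le> K * 1" using x(1) K(1) by (intro mult_left_mono) auto
    finally show "r \<le> K" by simp
  qed
  define m where "m = Sup S"
  have upper: "norm (app H x) \<le> m" if "norm x \<le> 1" for x
    unfolding m_def by (rule cSup_upper[OF _ Sbdd]) (use that in \<open>auto simp: S_def\<close>)
  have m0: "0 \<le> m" using upper[of 0] by simp
  have hbound: "norm (app H y) \<le> m * norm y" for y
  proof (cases "y = 0")
    case True then show ?thesis by simp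
  next
    case False
    then have ny: "norm y > 0" by simp
    define v where "v = scaleC (complex_of_real (1 / norm y)) y"
    have nv: "norm v = 1" using ny by (simp add: v_def norm_scaleC norm_divide)
    have "norm (app H v) = norm (app H y) / norm y" using ny by (simp add: v_def app_scaleC norm_scaleC norm_divide)
    then have "norm (app H y) / norm y \<le> m" using upper[of v] nv by simp
    then show ?thesis using ny by (simp add: field_simps)
  qed
  obtain x0 where x0: "app H x0 \<noteq> 0"
  proof -
    have "\<not> (\<forall>x. app H x = app 0 x)" using H0 bop_eqI by blast
    then show ?thesis using that by auto
  qed
  have mpos: "m > 0"
  proof -
    have "0 < norm (app H x0)" using x0 by simp
    also have "\<dots> \<le> m * norm x0" by (rule hbound)
    finally show ?thesis using m0 by (cases "m = 0") auto
  qed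
  define c where "c = complex_of_real m"
  have key: "\<not> invertible (scal (c * c) - H * H)"
  proof
    assume "invertible (scal (c * c) - H * H)"
    then obtain R where R: "R * (scal (c * c) - H * H) = 1" unfolding invertible_def by blast
    obtain KR where KR: "KR \<ge> 0" "\<And>x. norm (app R x) \<le> KR * norm x" using bop_bound[OF app_bounded] by blast
    define A where "A = KR^2 * m^3"
    have A0: "A \<ge> 0" using KR(1) mpos by (simp add: A_def)
    define d where "d = min (m/2) (1 / (8 * A + 1))"
    have d0: "d > 0" using mpos A0 by (simp add: d_def)
    have "m - d < m" using d0 by simp
    then obtain r where "r \<in> S" "m - d < r" unfolding m_def using less_cSup_iff[OF Sne Sbdd] by blast
    then obtain x where x1: "norm x \<le> 1" and x2: "m - d < norm (app H x)" unfolding S_def by auto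
    define y where "y = app H x"
    have ny: "norm y \<le> m" using upper[OF x1] by (simp add: y_def)
    have ny2: "m - d < norm y" using x2 by (simp add: y_def)
    have dm: "d \<le> m/2" by (simp add: d_def)
    define z where "z = scaleC (c * c) x - app H y"
    have zapp: "app (scal (c * c) - H * H) x = z" by (simp add: z_def y_def)
    have "x = app R z" using R zapp by (metis app_one app_times)
    then have xz: "norm x \<le> KR * norm z" using KR(2) by metis
    have "cinner (scaleC (c * c) x) (app H y) = (c * c) * cinner (app H x) y"
      using star_prop[of H x y] sa by (simp add: cinner_scaleC_left cinner_scaleC_right c_def)
    also have "\<dots> = complex_of_real (m^2 * (norm y)^2)"
      by (simp add: y_def cinner_self c_def power2_eq_square)
    finally have cre: "Re (cinner (scaleC (c * c) x) (app H y)) = m^2 * (norm y)^2" by simp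
    have n1: "norm (scaleC (c * c) x) \<le> m^2"
    proof -
      have "norm (scaleC (c * c) x) = m^2 * norm x" by (simp add: norm_scaleC c_def norm_mult power2_eq_square)
      also have "\<dots> \<le> m^2 * 1" using x1 by (intro mult_left_mono) auto
      finally show ?thesis by simp
    qed
    have n2: "norm (app H y) \<le> m * norm y" by (rule hbound)
    have "(norm z)^2 = (norm (scaleC (c * c) x))^2 + (norm (app H y))^2 - 2 * (m^2 * (norm y)^2)"
      unfolding z_def norm_sq_diff cre ..
    also have "\<dots> \<le> (m^2)^2 + (m * norm y)^2 - 2 * (m^2 * (norm y)^2)"
      using n1 n2 by (intro diff_right_mono add_mono power_mono) auto
    also have "\<dots> = m^2 * ((m - norm y) * (m + norm y))" by (simp add: power2_eq_square algebra_simps)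
    also have "\<dots> \<le> m^2 * (d * (2 * m))"
      using ny ny2 mpos by (intro mult_left_mono mult_mono) auto
    finally have z2: "(norm z)^2 \<le> 2 * m^3 * d" by (simp add: power2_eq_square power3_eq_cube algebra_simps)
    have "m / 2 < m * norm x"
    proof -
      have "m / 2 \<le> m - d" using dm by simp
      also have "\<dots> < norm y" by (rule ny2)
      also have "\<dots> \<le> m * norm x" unfolding y_def by (rule hbound)
      finally show ?thesis .
    qed
    then have nx: "1/2 < norm x" using mpos by (simp add: field_simps)
    have "1/4 \<le> (norm x)^2"
    proof -
      have "(1/2::real)^2 \<le> (norm x)^2" using nx by (intro power_mono) auto
      then show ?thesis by (simp add: power2_eq_square)
    qed
    also have "(norm x)^2 \<le> (KR * norm z)^2" using xz by (intro power_mono) auto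
    also have "\<dots> = KR^2 * (norm z)^2" by (simp add: power_mult_distrib)
    also have "\<dots> \<le> KR^2 * (2 * m^3 * d)" using z2 by (intro mult_left_mono) auto
    also have "\<dots> = 2 * A * d" by (simp add: A_def)
    finally have "1/4 \<le> 2 * A * d" .
    moreover have "d \<le> 1 / (8 * A + 1)" by (simp add: d_def)
    ultimately show False using real_contra_aux[OF A0 d0] by blast
  qed
  have "\<not> invertible (scal c - H) \<or> \<not> invertible (scal (-c) - H)"
    using key factor_sq[of c H] invertible_mult invertible_uminus by metis
  then show ?thesis
  proof
    assume "\<not> invertible (scal c - H)"
    then show ?thesis using mpos by (intro exI[of _ m]) (simp add: spec_def c_def)
  next
    assume "\<not> invertible (scal (-c) - H)"
    then show ?thesis using mpos by (intro exI[of _ "-m"]) (simp add: spec_def c_def)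
  qed
qed


definition alg :: "'a::{complex_inner,complete_space} bop set \<Rightarrow> bool" where
  "alg AA \<longleftrightarrow> 0 \<in> AA \<and> (\<forall>S\<in>AA. \<forall>T\<in>AA. S + T \<in> AA \<and> S * T \<in> AA) \<and>
     (\<forall>c. \<forall>T\<in>AA. scal c * T \<in> AA) \<and> (\<forall>T\<in>AA. star T \<in> AA)"

lemma alg_add: "alg AA \<Longrightarrow> S \<in> AA \<Longrightarrow> T \<in> AA \<Longrightarrow> S + T \<in> AA" unfolding alg_def by blast
lemma alg_mult: "alg AA \<Longrightarrow> S \<in> AA \<Longrightarrow> T \<in> AA \<Longrightarrow> S * T \<in> AA" unfolding alg_def by blast
lemma alg_scal: "alg AA \<Longrightarrow> T \<in> AA \<Longrightarrow> scal c * T \<in> AA" unfolding alg_def by blast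
lemma alg_star: "alg AA \<Longrightarrow> T \<in> AA \<Longrightarrow> star T \<in> AA" unfolding alg_def by blast
lemma alg_zero: "alg AA \<Longrightarrow> 0 \<in> AA" unfolding alg_def by blast
lemma alg_uminus: "alg AA \<Longrightarrow> T \<in> AA \<Longrightarrow> - T \<in> AA"
  using alg_scal[of AA T "-1"] by (simp add: scal_minus)
lemma alg_diff: "alg AA \<Longrightarrow> S \<in> AA \<Longrightarrow> T \<in> AA \<Longrightarrow> S - T \<in> AA"
  using alg_add[of AA S "- T"] alg_uminus[of AA T] by simp

lemma peval_in: "alg AA \<Longrightarrow> h \<in> AA \<Longrightarrow> h * peval p h \<in> AA"
proof (induct p)
  case 0 then show ?case by (simp add: alg_zero)
next
  case (pCons a p)
  have "h * peval (pCons a p) h = scal a * h + h * (h * peval p h)"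
    by (simp add: algebra_simps scal_commute)
  then show ?case using pCons by (simp add: alg_add alg_mult alg_scal)
qed

lemma real_prod_poly:
  assumes "finite L" "cnj ` L = L"
  shows "map_poly cnj (\<Prod>l\<in>L. [:- l, 1:]) = (\<Prod>l\<in>L. [:- l, 1:])"
proof -
  have "poly (map_poly cnj (\<Prod>l\<in>L. [:- l, 1:])) z = poly (\<Prod>l\<in>L. [:- l, 1:]) z" for z
  proof -
    have "poly (map_poly cnj (\<Prod>l\<in>L. [:- l, 1:])) z = (\<Prod>l\<in>L. z - cnj l)"
      by (simp add: poly_prod)
    also have "\<dots> = (\<Prod>l\<in>cnj ` L. z - l)"
    proof -
      have inj: "inj_on cnj L" by (rule inj_onI) (metis complex_cnj_cnj)
      show ?thesis by (simp only: prod.reindex[OF inj] o_def)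
    qed
    also have "\<dots> = poly (\<Prod>l\<in>L. [:- l, 1:]) z" using assms(2) by (simp add: poly_prod)
    finally show ?thesis .
  qed
  then have "poly (map_poly cnj (\<Prod>l\<in>L. [:- l, 1:])) = poly (\<Prod>l\<in>L. [:- l, 1:])" by (intro ext)
  then show ?thesis by (simp only: poly_eq_poly_eq_iff)
qed

lemma poly_prod_root:
  fixes L :: "complex set"
  assumes "finite L" "l \<in> L" shows "poly (\<Prod>l\<in>L. [:- l, 1:]) l = 0"
proof -
  have "poly [:- l, 1:] l = 0" by simp
  then have "\<exists>a\<in>L. poly [:- a, 1:] l = 0" using assms(2) by blast
  then show ?thesis unfolding poly_prod using assms(1) by (simp add: prod_zero_iff)
qed

lemma key_spectral:
  fixes h :: "'a::{complex_inner,complete_space} bop"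
  assumes AA: "alg AA" and hA: "h \<in> AA" and sa: "star h = h" and h0: "h \<noteq> 0"
    and fin: "finite (spec h)"
  shows "\<exists>l g f. l \<noteq> 0 \<and> f \<in> AA \<and> f * f = f \<and> star f = f \<and> f \<noteq> 0 \<and> f = h * g \<and> h * f = scal l * f"
proof -
  define Lam where "Lam = spec h \<union> cnj ` spec h \<union> {0}"
  have finL: "finite Lam" using fin by (simp add: Lam_def)
  have cnjL: "cnj ` Lam = Lam"
  proof -
    have "cnj ` Lam = cnj ` spec h \<union> cnj ` cnj ` spec h \<union> {0}" by (simp add: Lam_def image_Un)
    also have "cnj ` cnj ` spec h = spec h" by (simp add: image_image)
    finally show ?thesis by (auto simp: Lam_def)
  qed
  define N where "N = (\<Prod>l\<in>Lam. [:- l, 1:])"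
  have N0: "peval N h = 0"
  proof (rule ccontr)
    assume S0: "peval N h \<noteq> 0"
    have "star (peval N h) = peval (map_poly cnj N) h" using sa by (rule peval_star)
    also have "map_poly cnj N = N" unfolding N_def by (rule real_prod_poly[OF finL cnjL])
    finally have "star (peval N h) = peval N h" .
    then obtain r :: real where r: "r \<noteq> 0" "complex_of_real r \<in> spec (peval N h)"
      using spec_real_nonzero S0 by blast
    define P where "P = [:complex_of_real r:] - N"
    have rootN: "poly N l = 0" if "l \<in> Lam" for l unfolding N_def by (rule poly_prod_root[OF finL that])
    have "poly P 0 \<noteq> 0" using rootN[of 0] r(1) by (simp add: P_def Lam_def)
    then have P0: "P \<noteq> 0" by auto
    have "poly P l \<noteq> 0" if "l \<in> spec h" for l using rootN[of l] that r(1) by (simp add: P_def Lam_def)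
    then have "invertible (peval P h)" by (rule peval_invertible[OF P0])
    moreover have "peval P h = scal (complex_of_real r) - peval N h" by (simp add: P_def peval_diff)
    ultimately show False using r(2) by (simp add: spec_def)
  qed
  obtain r0 :: real where r0: "r0 \<noteq> 0" "complex_of_real r0 \<in> spec h"
    using spec_real_nonzero[OF sa h0] by blast
  define l0 where "l0 = complex_of_real r0"
  have l0s: "l0 \<in> spec h" using r0 by (simp add: l0_def)
  have l0L: "l0 \<in> Lam" using l0s by (simp add: Lam_def)
  have cl0: "cnj l0 = l0" by (simp add: l0_def)
  define M where "M = Lam - {l0}"
  have finM: "finite M" using finL by (simp add: M_def)
  have cnjM: "cnj ` M = M"
  proof -
    have "cnj ` M = cnj ` Lam - cnj ` {l0}" unfolding M_def by (rule image_set_diff) (metis complex_cnj_cnj injI)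
    then show ?thesis using cnjL cl0 by (simp add: M_def)
  qed
  have M0: "0 \<in> M" using r0(1) by (simp add: M_def Lam_def l0_def)
  define Q where "Q = (\<Prod>l\<in>M. [:- l, 1:])"
  have Ql0: "poly Q l0 \<noteq> 0" using finM by (simp add: Q_def poly_prod M_def)
  have realQ: "map_poly cnj Q = Q" unfolding Q_def by (rule real_prod_poly[OF finM cnjM])
  have cQ: "cnj (poly Q l0) = poly Q l0"
  proof -
    have "poly (map_poly cnj Q) l0 = cnj (poly Q l0)" using cl0 by simp
    then show ?thesis using realQ by simp
  qed
  define L where "L = smult (1 / poly Q l0) Q"
  have realL: "map_poly cnj L = L"
    unfolding L_def by (simp add: map_poly_smult realQ cQ)
  have polyL: "poly L l0 = 1" using Ql0 by (simp add: L_def)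
  have NQ: "N = [:- l0, 1:] * Q"
    unfolding N_def Q_def M_def using prod.remove[OF finL l0L, of "\<lambda>l. [:- l, 1:]"] by simp
  define f where "f = peval L h"
  have hf: "h * f = scal l0 * f"
  proof -
    have "[:- l0, 1:] * L = smult (1 / poly Q l0) N" by (simp add: L_def NQ mult_smult_right)
    then have "peval [:- l0, 1:] h * f = scal (1 / poly Q l0) * peval N h"
      by (metis f_def peval_mult peval_smult)
    then have "(h - scal l0) * f = 0" using N0 by (simp add: scal_minus algebra_simps)
    then show ?thesis by (simp add: algebra_simps)
  qed
  have ff: "f * f = f" unfolding f_def using peval_eig[OF hf[unfolded f_def], of L] polyL by simp
  have sf: "star f = f" unfolding f_def using peval_star[OF sa, of L] realL by simp
  have "poly L 0 = 0" using M0 finM by (simp add: L_def Q_def poly_prod_root)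
  then obtain L1 where L1: "L = [:- 0, 1:] * L1" using poly_eq_0_iff_dvd by (metis dvdE)
  define g where "g = peval L1 h"
  have fg: "f = h * g" unfolding f_def g_def L1 peval_mult peval_linear by simp
  have fA: "f \<in> AA" using peval_in[OF AA hA, of L1] fg g_def by simp
  have f0: "f \<noteq> 0"
  proof
    assume fz: "f = 0"
    have "poly (L - 1) l0 = 0" using polyL by simp
    then obtain R where R: "L - 1 = [:- l0, 1:] * R" using poly_eq_0_iff_dvd by (metis dvdE)
    have lin: "peval [:- l0, 1:] h = - (scal l0 - h)" by (simp only: peval_linear) simp
    have "peval [:- l0, 1:] h * peval R h = peval (L - 1) h" unfolding R by (rule peval_mult[symmetric])
    also have "\<dots> = f - 1" by (simp add: f_def peval_diff one_pCons)
    also have "\<dots> = - 1" using fz by simp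
    finally have e: "peval [:- l0, 1:] h * peval R h = - 1" .
    then have "- (scal l0 - h) * peval R h = - 1" unfolding lin .
    then have 1: "(scal l0 - h) * peval R h = 1" by (metis minus_mult_left neg_equal_iff_equal)
    have "peval R h * peval [:- l0, 1:] h = - 1" using peval_comm e by metis
    then have "peval R h * (- (scal l0 - h)) = - 1" unfolding lin .
    then have 2: "peval R h * (scal l0 - h) = 1" by (metis minus_mult_right neg_equal_iff_equal)
    have "invertible (scal l0 - h)" using 1 2 unfolding invertible_def by blast
    then show False using l0s by (simp add: spec_def)
  qed
  have l00: "l0 \<noteq> 0" using r0(1) by (simp add: l0_def)
  show ?thesis using l00 fA ff sf f0 fg hf by blast
qed


definition proj :: "'a::{complex_inner,complete_space} bop set \<Rightarrow> 'a bop \<Rightarrow> bool" where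
  "proj AA p \<longleftrightarrow> p \<in> AA \<and> p * p = p \<and> star p = p"

definition orthfam :: "'a::{complex_inner,complete_space} bop set \<Rightarrow> 'a bop set \<Rightarrow> bool" where
  "orthfam AA D \<longleftrightarrow> (\<forall>p\<in>D. proj AA p \<and> p \<noteq> 0) \<and> (\<forall>p\<in>D. \<forall>q\<in>D. p \<noteq> q \<longrightarrow> p * q = 0)"

lemma proj_le_sym: "proj AA p \<Longrightarrow> proj AA q \<Longrightarrow> p * q = p \<Longrightarrow> q * p = p"
  unfolding proj_def by (metis star_mult)

lemma orth_sym: "proj AA p \<Longrightarrow> proj AA q \<Longrightarrow> p * q = 0 \<Longrightarrow> q * p = 0"
  unfolding proj_def by (metis star_mult star_zero)

lemma orth_seq:
  fixes d :: "nat \<Rightarrow> 'a::{complex_inner,complete_space} bop"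
  assumes "\<And>n. proj AA (d n)" "\<And>n. d n \<noteq> 0" "\<And>n m. n \<noteq> m \<Longrightarrow> d n * d m = 0"
  shows "\<exists>D. infinite D \<and> orthfam AA D"
proof -
  have inj: "inj d"
  proof (rule injI)
    fix n m assume "d n = d m"
    show "n = m"
    proof (rule ccontr)
      assume "n \<noteq> m"
      then have "d n * d m = 0" by (rule assms(3))
      moreover have "d n * d m = d n" using \<open>d n = d m\<close> assms(1)[of n] by (simp add: proj_def)
      ultimately show False using assms(2)[of n] by simp
    qed
  qed
  have "infinite (range d)"
  proof
    assume "finite (range d)"
    then have "finite (UNIV::nat set)" by (rule finite_imageD[OF _ inj])
    then show False by simp
  qed
  moreover have "orthfam AA (range d)" unfolding orthfam_def using assms by (auto, metis)
  ultimately show ?thesis by blast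
qed

lemma diff_proj: "alg AA \<Longrightarrow> proj AA a \<Longrightarrow> proj AA b \<Longrightarrow> a * b = a \<Longrightarrow> proj AA (b - a)"
proof -
  assume AA: "alg AA" and a: "proj AA a" and b: "proj AA b" and ab: "a * b = a"
  have ba: "b * a = a" by (rule proj_le_sym[OF a b ab])
  have "(b - a) * (b - a) = b * b - b * a - a * b + a * a" by (simp add: algebra_simps)
  also have "\<dots> = b - a" using a b ab ba by (simp add: proj_def)
  finally show ?thesis using a b AA by (simp add: proj_def star_diff alg_diff)
qed

lemma nested_orth:
  fixes a b c d :: "'a::ring"
  assumes "a * b = a" "b * a = a" "b * c = b" "c * b = b" "c * d = c" "d * c = c"
  shows "(b - a) * (d - c) = 0" "(d - c) * (b - a) = 0"
proof -
  have bd: "b * d = b" by (metis assms(3,5) mult.assoc)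
  have db: "d * b = b" by (metis assms(4,6) mult.assoc)
  have ac: "a * c = a" by (metis assms(1,3) mult.assoc)
  have ca: "c * a = a" by (metis assms(2,4) mult.assoc)
  have ad: "a * d = a" by (metis ac assms(5) mult.assoc)
  have da: "d * a = a" by (metis ca assms(6) mult.assoc)
  show "(b - a) * (d - c) = 0" by (simp add: algebra_simps bd assms(3) ad ac)
  show "(d - c) * (b - a) = 0" by (simp add: algebra_simps db assms(4) da ca)
qed

lemma chain_le:
  assumes "\<And>n. R (s n) (s (Suc n))" "\<And>n. R (s n) (s n)" "\<And>x y z. R x y \<Longrightarrow> R y z \<Longrightarrow> R x z"
  shows "n \<le> m \<Longrightarrow> R (s n) (s m)"
proof (induct m)
  case 0 then show ?case using assms(2) by simp
next
  case (Suc m)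
  show ?case
  proof (cases "n = Suc m")
    case True then show ?thesis using assms(2) by simp
  next
    case False
    then have "n \<le> m" using Suc(2) by simp
    then show ?thesis using Suc(1) assms(1,3) by blast
  qed
qed

definition ple :: "'a::{complex_inner,complete_space} bop \<Rightarrow> 'a bop \<Rightarrow> bool" where
  "ple x y \<longleftrightarrow> x * y = x \<and> y * x = x"

lemma ple_refl: "proj AA x \<Longrightarrow> ple x x" by (simp add: ple_def proj_def)
lemma ple_trans: "ple x y \<Longrightarrow> ple y z \<Longrightarrow> ple x z"
  unfolding ple_def by (metis mult.assoc)

lemma inc_chain_family:
  assumes AA: "alg AA" and p: "\<And>n. proj AA (s n)" and le: "\<And>n. s n * s (Suc n) = s n"
    and ne: "\<And>n. s n \<noteq> s (Suc n)"
  shows "\<exists>D. infinite D \<and> orthfam AA D"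
proof -
  have R: "ple (s n) (s (Suc n))" for n using le[of n] proj_le_sym[OF p p le[of n]] by (simp add: ple_def)
  have cle0: "n \<le> m \<Longrightarrow> (\<lambda>x y. ple x y \<and> proj AA x \<and> proj AA y) (s n) (s m)" for n m
    by (rule chain_le[where R = "\<lambda>x y. ple x y \<and> proj AA x \<and> proj AA y" and s = s]) (use R p in \<open>auto intro: ple_trans ple_refl\<close>)
  have cle: "n \<le> m \<Longrightarrow> ple (s n) (s m)" for n m using cle0[of n m] by simp
  define d where "d n = s (Suc n) - s n" for n
  have dp: "proj AA (d n)" for n unfolding d_def by (rule diff_proj[OF AA p p le])
  have d0: "d n \<noteq> 0" for n using ne[of n] by (simp add: d_def)
  have orth: "d n * d m = 0" if "n < m" for n m
  proof -
    have 1: "ple (s n) (s (Suc n))" using R .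
    have 2: "ple (s (Suc n)) (s m)" using cle that by simp
    have 3: "ple (s m) (s (Suc m))" using R .
    show ?thesis unfolding d_def using nested_orth(1)[of "s n" "s (Suc n)" "s m" "s (Suc m)"] 1 2 3
      by (simp add: ple_def)
  qed
  have "d n * d m = 0" if "n \<noteq> m" for n m
  proof (cases "n < m")
    case True then show ?thesis by (rule orth)
  next
    case False
    then have "m < n" using that by simp
    then have "d m * d n = 0" by (rule orth)
    then show ?thesis by (rule orth_sym[OF dp dp])
  qed
  then show ?thesis using orth_seq[OF dp d0] by blast
qed

lemma dec_chain_family:
  assumes AA: "alg AA" and p: "\<And>n. proj AA (s n)" and le: "\<And>n. s (Suc n) * s n = s (Suc n)"
    and ne: "\<And>n. s n \<noteq> s (Suc n)"
  shows "\<exists>D. infinite D \<and> orthfam AA D"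
proof -
  have R: "ple (s (Suc n)) (s n)" for n using le[of n] proj_le_sym[OF p p le[of n]] by (simp add: ple_def)
  have cle0: "n \<le> m \<Longrightarrow> (\<lambda>x y. ple y x \<and> proj AA x \<and> proj AA y) (s n) (s m)" for n m
    by (rule chain_le[where R = "\<lambda>x y. ple y x \<and> proj AA x \<and> proj AA y" and s = s]) (use R p in \<open>auto intro: ple_trans ple_refl\<close>)
  have cle: "n \<le> m \<Longrightarrow> ple (s m) (s n)" for n m using cle0[of n m] by simp
  define d where "d n = s n - s (Suc n)" for n
  have dp: "proj AA (d n)" for n unfolding d_def by (rule diff_proj[OF AA p p le])
  have d0: "d n \<noteq> 0" for n using ne[of n] by (simp add: d_def)
  have orth: "d m * d n = 0" if "n < m" for n m
  proof -
    have 1: "ple (s (Suc m)) (s m)" using R .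
    have 2: "ple (s m) (s (Suc n))" using cle that by simp
    have 3: "ple (s (Suc n)) (s n)" using R .
    show ?thesis unfolding d_def using nested_orth(1)[of "s (Suc m)" "s m" "s (Suc n)" "s n"] 1 2 3
      by (simp add: ple_def)
  qed
  have "d n * d m = 0" if "n \<noteq> m" for n m
  proof (cases "m < n")
    case True then show ?thesis by (rule orth)
  next
    case False
    then have "n < m" using that by simp
    then have "d m * d n = 0" by (rule orth)
    then show ?thesis by (rule orth_sym[OF dp dp])
  qed
  then show ?thesis using orth_seq[OF dp d0] by blast
qed

lemma family_chain:
  assumes AA: "alg AA" and D: "infinite D" "orthfam AA D"
  shows "\<exists>s. (\<forall>n. proj AA (s n)) \<and> (\<forall>n. s n * s (Suc n) = s n \<and> s n \<noteq> s (Suc n))"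
proof -
  obtain f :: "nat \<Rightarrow> _" where f: "inj f" "range f \<subseteq> D" using infinite_countable_subset D(1) by blast
  have fp: "proj AA (f n)" "f n \<noteq> 0" for n using f(2) D(2) unfolding orthfam_def by auto
  have fo: "f n * f m = 0" if "n \<noteq> m" for n m
    using f D(2) that unfolding orthfam_def by (metis inj_eq range_subsetD)
  define s where "s = rec_nat (f 0) (\<lambda>n r. r + f (Suc n))"
  have s0: "s 0 = f 0" and sS: "s (Suc n) = s n + f (Suc n)" for n by (simp_all add: s_def)
  have inv: "proj AA (s n) \<and> (\<forall>m>n. s n * f m = 0 \<and> f m * s n = 0)" for n
  proof (induct n)
    case 0 then show ?case using fp fo by (simp add: s0)
  next
    case (Suc n)
    have pn: "proj AA (s n)" and on: "\<And>m. m > n \<Longrightarrow> s n * f m = 0 \<and> f m * s n = 0" using Suc by auto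
    have a: "s n * f (Suc n) = 0" "f (Suc n) * s n = 0" using on[of "Suc n"] by auto
    have "(s n + f (Suc n)) * (s n + f (Suc n)) = s n * s n + s n * f (Suc n) + f (Suc n) * s n + f (Suc n) * f (Suc n)"
      by (simp add: algebra_simps)
    also have "\<dots> = s n + f (Suc n)" using a pn fp(1)[of "Suc n"] by (simp add: proj_def)
    finally have "proj AA (s (Suc n))" using pn fp(1)[of "Suc n"] AA
      by (simp add: sS proj_def star_add alg_add)
    moreover have "s (Suc n) * f m = 0 \<and> f m * s (Suc n) = 0" if "m > Suc n" for m
      using on[of m] fo[of "Suc n" m] fo[of m "Suc n"] that by (simp add: sS algebra_simps)
    ultimately show ?case by blast
  qed
  have "s n * s (Suc n) = s n \<and> s n \<noteq> s (Suc n)" for n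
  proof -
    have "s n * s (Suc n) = s n * s n + s n * f (Suc n)" by (simp add: sS algebra_simps)
    also have "\<dots> = s n" using inv[of n] by (simp add: proj_def)
    finally show ?thesis using fp(2)[of "Suc n"] by (simp add: sS)
  qed
  then show ?thesis using inv by blast
qed


interpretation bv: vector_space "\<lambda>c (T::'a::complex_inner bop). scal c * T"
  by unfold_locales (simp_all add: algebra_simps scal_add scal_mult mult.assoc)

lemma scal_left_comm: "T * (scal c * X) = scal c * (T * X)"
  by (metis mult.assoc scal_commute)

definition fd :: "'a::{complex_inner,complete_space} bop set \<Rightarrow> bool" where
  "fd AA \<longleftrightarrow> (\<exists>B. finite B \<and> B \<subseteq> AA \<and> AA \<subseteq> bv.span B)"

definition noinf :: "'a::{complex_inner,complete_space} bop set \<Rightarrow> bool" where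
  "noinf AA \<longleftrightarrow> \<not> (\<exists>D. infinite D \<and> orthfam AA D)"

lemma fd_noinf:
  assumes "fd AA" "orthfam AA D"
  shows "finite D"
proof -
  obtain B where B: "finite B" "B \<subseteq> AA" "AA \<subseteq> bv.span B" using assms(1) unfolding fd_def by blast
  have orth: "\<And>p q. p \<in> D \<Longrightarrow> q \<in> D \<Longrightarrow> p \<noteq> q \<Longrightarrow> p * q = 0"
    and pr: "\<And>p. p \<in> D \<Longrightarrow> proj AA p" and nz: "\<And>p. p \<in> D \<Longrightarrow> p \<noteq> 0"
    using assms(2) unfolding orthfam_def by auto
  have DA: "D \<subseteq> AA" using pr unfolding proj_def by blast
  have indep: "bv.independent D"
    unfolding bv.independent_explicit_finite_subsets
  proof (intro allI impI ballI)
    fix S u v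
    assume S: "S \<subseteq> D" "finite S" and sum0: "(\<Sum>w\<in>S. scal (u w) * w) = 0" and v: "v \<in> S"
    have vD: "v \<in> D" using S v by blast
    have e1: "v * (\<Sum>w\<in>S. scal (u w) * w) = (\<Sum>w\<in>S. scal (u w) * (v * w))"
      unfolding sum_distrib_left by (rule sum.cong[OF refl], rule scal_left_comm)
    have e2: "(\<Sum>w\<in>S. scal (u w) * (v * w)) = scal (u v) * (v * v) + (\<Sum>w\<in>S - {v}. scal (u w) * (v * w))"
      using sum.remove[OF S(2) v, where g = "\<lambda>w. scal (u w) * (v * w)"] by simp
    have e3: "(\<Sum>w\<in>S - {v}. scal (u w) * (v * w)) = 0"
    proof (rule sum.neutral, rule ballI)
      fix w assume "w \<in> S - {v}"
      then have "w \<in> D" "w \<noteq> v" using S(1) by auto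
      then have "v * w = 0" using orth vD by metis
      then show "scal (u w) * (v * w) = 0" by simp
    qed
    have e4: "v * v = v" using pr[OF vD] unfolding proj_def by blast
    have "scal (u v) * v = 0" using e1 e2 e3 e4 sum0 by simp
    moreover have "v \<noteq> 0" using nz[OF vD] .
    ultimately show "u v = 0" using scal_cancel by blast
  qed
  have "D \<subseteq> bv.span B" using DA B(3) by (rule subset_trans)
  then have "finite D \<and> card D \<le> card B" by (rule bv.independent_span_bound[OF B(1) indep])
  then show ?thesis by simp
qed

definition minimal :: "'a::{complex_inner,complete_space} bop set \<Rightarrow> 'a bop \<Rightarrow> bool" where
  "minimal AA e \<longleftrightarrow> proj AA e \<and> e \<noteq> 0 \<and> (\<forall>q. proj AA q \<and> q \<noteq> 0 \<and> q * e = q \<longrightarrow> q = e)"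

lemma exists_minimal:
  assumes AA: "alg AA" and ni: "noinf AA" and p: "proj AA p" "p \<noteq> 0"
  shows "\<exists>q. minimal AA q \<and> q * p = q"
proof (rule ccontr)
  assume nm: "\<not> (\<exists>q. minimal AA q \<and> q * p = q)"
  define P where "P q \<longleftrightarrow> proj AA q \<and> q \<noteq> 0 \<and> q * p = q" for q
  have step: "\<exists>r. P r \<and> r * q = r \<and> r \<noteq> q" if Pq: "P q" for q
  proof -
    have "\<not> minimal AA q" using nm Pq by (auto simp: P_def)
    then obtain r where r: "proj AA r" "r \<noteq> 0" "r * q = r" "r \<noteq> q"
      using Pq unfolding minimal_def P_def by blast
    have "r * p = r" using r(3) Pq unfolding P_def by (metis mult.assoc)
    then show ?thesis using r by (auto simp: P_def)
  qed
  define nx where "nx q = (SOME r. P r \<and> r * q = r \<and> r \<noteq> q)" for q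
  have nxP: "P (nx q) \<and> nx q * q = nx q \<and> nx q \<noteq> q" if "P q" for q
    unfolding nx_def by (rule someI_ex[OF step[OF that]])
  define s where "s n = (nx ^^ n) p" for n
  have Ps: "P (s n)" for n
  proof (induct n)
    case 0 then show ?case using p by (simp add: s_def P_def proj_def)
  next
    case (Suc n) then show ?case using nxP by (simp add: s_def)
  qed
  have sS: "s (Suc n) = nx (s n)" for n by (simp add: s_def)
  have "\<exists>D. infinite D \<and> orthfam AA D"
  proof (rule dec_chain_family[OF AA, of s])
    show "proj AA (s n)" for n using Ps[of n] by (simp add: P_def)
    show "s (Suc n) * s n = s (Suc n)" for n using nxP[OF Ps[of n]] by (simp add: sS)
    show "s n \<noteq> s (Suc n)" for n using nxP[OF Ps[of n]] by (metis sS)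
  qed
  then show False using ni by (simp add: noinf_def)
qed

lemma maximal_family:
  assumes AA: "alg AA" and ni: "noinf AA"
  shows "\<exists>E. finite E \<and> (\<forall>e\<in>E. minimal AA e) \<and> (\<forall>e\<in>E. \<forall>e'\<in>E. e \<noteq> e' \<longrightarrow> e * e' = 0) \<and>
      (\<forall>q. minimal AA q \<longrightarrow> \<not> (\<forall>e\<in>E. q * e = 0))"
proof (rule ccontr)
  define Good where "Good E \<longleftrightarrow> finite E \<and> (\<forall>e\<in>E. minimal AA e) \<and> (\<forall>e\<in>E. \<forall>e'\<in>E. e \<noteq> e' \<longrightarrow> e * e' = 0)" for E
  assume nt: "\<not> ?thesis"
  have ext: "\<exists>q. minimal AA q \<and> (\<forall>e\<in>E. q * e = 0)" if gE: "Good E" for E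
  proof (rule ccontr)
    assume "\<not> (\<exists>q. minimal AA q \<and> (\<forall>e\<in>E. q * e = 0))"
    then have "\<forall>q. minimal AA q \<longrightarrow> \<not> (\<forall>e\<in>E. q * e = 0)" by simp
    then have "finite E \<and> (\<forall>e\<in>E. minimal AA e) \<and> (\<forall>e\<in>E. \<forall>e'\<in>E. e \<noteq> e' \<longrightarrow> e * e' = 0) \<and>
      (\<forall>q. minimal AA q \<longrightarrow> \<not> (\<forall>e\<in>E. q * e = 0))" using gE unfolding Good_def by simp
    then show False by (rule notE[OF nt, OF exI])
  qed
  define G where "G E = (SOME q. minimal AA q \<and> (\<forall>e\<in>E. q * e = 0))" for E
  have GP: "minimal AA (G E) \<and> (\<forall>e\<in>E. G E * e = 0)" if "Good E" for E
    unfolding G_def by (rule someI_ex[OF ext[OF that]])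
  define F where "F n = ((\<lambda>E. insert (G E) E) ^^ n) {}" for n
  have FS: "F (Suc n) = insert (G (F n)) (F n)" for n by (simp add: F_def)
  have mp: "minimal AA q \<Longrightarrow> proj AA q" for q by (simp add: minimal_def)
  have GF: "Good (F n)" for n
  proof (induct n)
    case 0 then show ?case by (simp add: F_def Good_def)
  next
    case (Suc n)
    have g: "minimal AA (G (F n))" "\<And>e. e \<in> F n \<Longrightarrow> G (F n) * e = 0" using GP[OF Suc] by auto
    have Fm: "\<And>e. e \<in> F n \<Longrightarrow> minimal AA e" and Ff: "finite (F n)"
      and Fo: "\<And>e e'. e \<in> F n \<Longrightarrow> e' \<in> F n \<Longrightarrow> e \<noteq> e' \<Longrightarrow> e * e' = 0"
      using Suc unfolding Good_def by auto
    have g2: "e * G (F n) = 0" if "e \<in> F n" for e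
      by (rule orth_sym[OF mp[OF g(1)] mp[OF Fm[OF that]] g(2)[OF that]])
    have "finite (F (Suc n))" using Ff by (simp add: FS)
    moreover have "\<forall>e\<in>F (Suc n). minimal AA e" using Fm g(1) by (simp add: FS)
    moreover have "\<forall>e\<in>F (Suc n). \<forall>e'\<in>F (Suc n). e \<noteq> e' \<longrightarrow> e * e' = 0"
      unfolding FS using Fo g(2) g2 by auto
    ultimately show ?case unfolding Good_def by blast
  qed
  define d where "d n = G (F n)" for n
  have dm: "minimal AA (d n)" for n using GP[OF GF] by (simp add: d_def)
  have dF: "n < m \<Longrightarrow> d n \<in> F m" for n m
  proof (induct m)
    case 0 then show ?case by simp
  next
    case (Suc m) then show ?case by (cases "n = m") (auto simp: FS d_def)
  qed
  have orth1: "d m * d n = 0" if "n < m" for n m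
    using GP[OF GF[of m]] dF[OF that] by (simp add: d_def)
  have orth: "d n * d m = 0" if "n \<noteq> m" for n m
  proof (cases "m < n")
    case True then show ?thesis by (rule orth1)
  next
    case False
    then have "n < m" using that by simp
    then have "d m * d n = 0" by (rule orth1)
    then show ?thesis by (rule orth_sym[OF mp[OF dm] mp[OF dm]])
  qed
  have "\<exists>D. infinite D \<and> orthfam AA D"
    by (rule orth_seq[of AA d]) (use dm orth in \<open>auto simp: minimal_def\<close>)
  then show False using ni by (simp add: noinf_def)
qed


lemma star_sum: "star (sum f S) = (\<Sum>x\<in>S. star (f x))"
  by (induct S rule: infinite_finite_induct) (simp_all add: star_add)

lemma alg_sum: "alg AA \<Longrightarrow> (\<And>x. x \<in> S \<Longrightarrow> f x \<in> AA) \<Longrightarrow> sum f S \<in> AA"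
  by (induct S rule: infinite_finite_induct) (simp_all add: alg_zero alg_add)

lemma scal_two: "scal 2 * a = a + a"
proof -
  have e: "scal 2 = scal 1 + scal 1" by (simp only: scal_add[symmetric] one_add_one)
  show ?thesis unfolding e scal_one distrib_right mult_1_left ..
qed

lemma decomp: "a = scal (1/2) * (a + star a) + scal (-\<i>/2) * (scal \<i> * (a - star a))"
proof -
  have "scal (-\<i>/2) * (scal \<i> * (a - star a)) = scal (1/2) * (a - star a)"
    by (simp add: scal_assoc)
  then have "scal (1/2) * (a + star a) + scal (-\<i>/2) * (scal \<i> * (a - star a)) = scal (1/2) * (a + a)"
    by (simp add: algebra_simps)
  also have "\<dots> = scal (1/2) * (scal 2 * a)" by (simp add: scal_two)
  also have "\<dots> = a" by (simp add: scal_assoc)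
  finally show ?thesis by simp
qed

lemma sa1: "star (a + star a) = a + star a"
  by (simp add: star_add add.commute)
lemma sa2: "star (scal \<i> * (a - star a)) = scal \<i> * (a - star a)"
  by (simp add: star_scal_mult star_diff scal_minus algebra_simps)

locale setting =
  fixes AA :: "'a::{complex_inner,complete_space} bop set"
  assumes AA: "alg AA" and sfin: "\<And>h. h \<in> AA \<Longrightarrow> star h = h \<Longrightarrow> finite (spec h)"
begin

lemma corner_scal_sa:
  assumes e: "minimal AA e" and h: "h \<in> AA" "star h = h" "e * h = h" "h * e = h"
  shows "\<exists>c. h = scal c * e"
proof (cases "h = 0")
  case True then show ?thesis by (intro exI[of _ 0]) simp
next
  case False
  obtain l g f where lgf: "l \<noteq> 0" "f \<in> AA" "f * f = f" "star f = f" "f \<noteq> 0" "f = h * g" "h * f = scal l * f"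
    using key_spectral[OF AA h(1,2) False sfin[OF h(1,2)]] by blast
  have pe: "proj AA e" "e \<noteq> 0" using e by (auto simp: minimal_def)
  have ef: "e * f = f" using lgf(6) h(3) by (metis mult.assoc)
  have "star (e * f) = f * e" using lgf(4) pe(1) by (simp add: star_mult proj_def)
  then have fe: "f * e = f" using ef lgf(4) by simp
  have "proj AA f" using lgf by (simp add: proj_def)
  then have "f = e" using e lgf(5) fe by (simp add: minimal_def)
  then have "h = scal l * e" using lgf(7) h(4) by simp
  then show ?thesis by blast
qed

lemma corner_scal:
  assumes e: "minimal AA e" and y: "y \<in> AA" "e * y = y" "y * e = y"
  shows "\<exists>c. y = scal c * e"
proof -
  have pe: "e \<in> AA" "e * e = e" "star e = e" using e by (auto simp: minimal_def proj_def)
  have sy1: "e * star y = star y" using y(3) pe(3) by (metis star_mult)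
  have sy2: "star y * e = star y" using y(2) pe(3) by (metis star_mult)
  define h1 where "h1 = y + star y"
  define h2 where "h2 = scal \<i> * (y - star y)"
  have h1: "h1 \<in> AA" "star h1 = h1" "e * h1 = h1" "h1 * e = h1"
  proof -
    show "h1 \<in> AA" unfolding h1_def by (rule alg_add[OF AA y(1) alg_star[OF AA y(1)]])
    show "star h1 = h1" unfolding h1_def by (rule sa1)
    show "e * h1 = h1" unfolding h1_def by (simp only: distrib_left y(2) sy1)
    show "h1 * e = h1" unfolding h1_def by (simp only: distrib_right y(3) sy2)
  qed
  have h2: "h2 \<in> AA" "star h2 = h2" "e * h2 = h2" "h2 * e = h2"
  proof -
    show "h2 \<in> AA" unfolding h2_def by (rule alg_scal[OF AA alg_diff[OF AA y(1) alg_star[OF AA y(1)]]])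
    show "star h2 = h2" unfolding h2_def by (rule sa2)
    show "e * h2 = h2" unfolding h2_def by (simp only: scal_left_comm right_diff_distrib y(2) sy1)
    show "h2 * e = h2" unfolding h2_def by (simp only: mult.assoc left_diff_distrib y(3) sy2)
  qed
  obtain c1 where c1: "h1 = scal c1 * e" using corner_scal_sa[OF e h1] by blast
  obtain c2 where c2: "h2 = scal c2 * e" using corner_scal_sa[OF e h2] by blast
  have "y = scal (1/2) * h1 + scal (-\<i>/2) * h2" unfolding h1_def h2_def by (rule decomp)
  also have "\<dots> = scal (1/2 * c1 + (-\<i>/2) * c2) * e" by (simp add: c1 c2 scal_assoc scal_add scal_diff distrib_right left_diff_distrib)
  finally show ?thesis by blast
qed

end


locale maxsetting = setting AA for AA :: "'a::{complex_inner,complete_space} bop set" +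
  fixes E :: "'a bop set"
  assumes ni: "noinf AA" and finE: "finite E" and minE: "\<And>i. i \<in> E \<Longrightarrow> minimal AA i"
    and orthE: "\<And>i j. i \<in> E \<Longrightarrow> j \<in> E \<Longrightarrow> i \<noteq> j \<Longrightarrow> i * j = 0"
    and maxE: "\<And>q. minimal AA q \<Longrightarrow> \<not> (\<forall>i\<in>E. q * i = 0)"
begin

definition e where "e = sum id E"

lemma projE: "i \<in> E \<Longrightarrow> i \<in> AA \<and> i * i = i \<and> star i = i"
  using minE by (auto simp: minimal_def proj_def)

lemma ie: "i \<in> E \<Longrightarrow> i * e = i"
proof -
  assume i: "i \<in> E"
  have "i * e = (\<Sum>j\<in>E. i * j)" by (simp add: e_def sum_distrib_left)
  also have "\<dots> = i * i + (\<Sum>j\<in>E - {i}. i * j)" by (rule sum.remove[OF finE i])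
  also have "(\<Sum>j\<in>E - {i}. i * j) = 0" by (rule sum.neutral) (use orthE i in auto)
  finally show ?thesis using projE[OF i] by simp
qed

lemma ei: "i \<in> E \<Longrightarrow> e * i = i"
proof -
  assume i: "i \<in> E"
  have "e * i = (\<Sum>j\<in>E. j * i)" by (simp add: e_def sum_distrib_right)
  also have "\<dots> = i * i + (\<Sum>j\<in>E - {i}. j * i)" by (rule sum.remove[OF finE i])
  also have "(\<Sum>j\<in>E - {i}. j * i) = 0" by (rule sum.neutral) (use orthE i in auto)
  finally show ?thesis using projE[OF i] by simp
qed

lemma eA: "e \<in> AA" unfolding e_def by (rule alg_sum[OF AA]) (simp add: projE)
lemma se: "star e = e" unfolding e_def by (simp add: star_sum projE)
lemma ee: "e * e = e"
proof -
  have "e * e = (\<Sum>i\<in>E. i * e)" by (simp add: e_def sum_distrib_right)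
  also have "\<dots> = (\<Sum>i\<in>E. i)" by (rule sum.cong) (simp_all add: ie)
  finally show ?thesis by (simp add: e_def)
qed
lemma ee2: "e * (e * X) = e * X" by (simp add: mult.assoc[symmetric] ee)

definition Y where "Y x = x - e * x - x * e + e * x * e"

lemma Y_in: "x \<in> AA \<Longrightarrow> Y x \<in> AA"
  unfolding Y_def using eA AA by (simp add: alg_add alg_diff alg_mult)

lemma Y_sa: "star x = x \<Longrightarrow> star (Y x) = Y x"
  unfolding Y_def by (simp add: star_add star_diff star_mult se mult.assoc algebra_simps)

lemma eY: "e * Y x = 0" unfolding Y_def by (simp add: algebra_simps ee2)
lemma Ye: "Y x * e = 0" unfolding Y_def by (simp add: algebra_simps ee ee2)

lemma Y_zero_sa:
  assumes a: "a \<in> AA" "star a = a"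
  shows "Y a = 0"
proof (rule ccontr)
  assume h0: "Y a \<noteq> 0"
  obtain l g f where lgf: "l \<noteq> 0" "f \<in> AA" "f * f = f" "star f = f" "f \<noteq> 0" "f = Y a * g" "Y a * f = scal l * f"
    using key_spectral[OF AA Y_in[OF a(1)] Y_sa[OF a(2)] h0 sfin[OF Y_in[OF a(1)] Y_sa[OF a(2)]]] by blast
  have ef: "e * f = 0" using lgf(6) eY by (metis mult.assoc mult_zero_left)
  have fe: "f * e = 0"
  proof -
    have "star (e * f) = f * e" using lgf(4) se by (simp add: star_mult)
    then show ?thesis using ef by simp
  qed
  have pf: "proj AA f" using lgf by (simp add: proj_def)
  obtain q where q: "minimal AA q" "q * f = q" using exists_minimal[OF AA ni pf lgf(5)] by blast
  have "q * i = 0" if i: "i \<in> E" for i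
  proof -
    have "q * i = q * f * (e * i)" using q(2) ei[OF i] by simp
    also have "\<dots> = q * (f * e) * i" by (simp add: mult.assoc)
    finally show ?thesis using fe by simp
  qed
  then show False using maxE[OF q(1)] by blast
qed

lemma Y_lin: "Y (scal c * x + scal d * z) = scal c * Y x + scal d * Y z"
  unfolding Y_def by (simp add: algebra_simps scal_left_comm[of e])

lemma Y_zero:
  assumes a: "a \<in> AA"
  shows "Y a = 0"
proof -
  define h1 where "h1 = a + star a"
  define h2 where "h2 = scal \<i> * (a - star a)"
  have h1: "h1 \<in> AA" "star h1 = h1" unfolding h1_def
    by (rule alg_add[OF AA a alg_star[OF AA a]], rule sa1)
  have h2: "h2 \<in> AA" "star h2 = h2" unfolding h2_def
    by (rule alg_scal[OF AA alg_diff[OF AA a alg_star[OF AA a]]], rule sa2)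
  have "Y a = Y (scal (1/2) * h1 + scal (-\<i>/2) * h2)" unfolding h1_def h2_def using decomp by metis
  also have "\<dots> = 0" by (simp only: Y_lin Y_zero_sa[OF h1] Y_zero_sa[OF h2]) simp
  finally show ?thesis .
qed

lemma a_corner:
  assumes a: "a \<in> AA"
  shows "a = e * a * e"
proof -
  define x where "x = a * e - e * a * e"
  have sx: "star x = e * star a - e * star a * e" unfolding x_def
    by (simp add: star_diff star_mult se mult.assoc)
  have "x * star x = Y (a * e * star a)" unfolding sx unfolding x_def Y_def
    by (simp add: algebra_simps ee ee2)
  also have "\<dots> = 0" by (rule Y_zero) (use a eA AA in \<open>simp add: alg_mult alg_star\<close>)
  finally have "star (star x) * star x = 0" by simp
  then have "star x = 0" by (rule star_self_zero)
  then have x0: "x = 0" by (metis star_star star_zero)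
  define z where "z = e * a - e * a * e"
  have sz: "star z = star a * e - e * star a * e" unfolding z_def
    by (simp add: star_diff star_mult se mult.assoc)
  have "star z * z = Y (star a * e * a)" unfolding sz unfolding z_def Y_def
    by (simp add: algebra_simps ee ee2)
  also have "\<dots> = 0" by (rule Y_zero) (use a eA AA in \<open>simp add: alg_mult alg_star\<close>)
  finally have z0: "z = 0" by (rule star_self_zero)
  have "Y a = 0" by (rule Y_zero[OF a])
  then show ?thesis using x0 z0 unfolding Y_def x_def z_def by (simp add: algebra_simps)
qed

end


context maxsetting
begin

definition good where "good i j b \<longleftrightarrow> b \<in> AA \<and> i * b = b \<and> b * j = b \<and> b \<noteq> 0"
definition pick where "pick i j = (if \<exists>b. good i j b then SOME b. good i j b else 0)"

lemma pick_in: "pick i j \<in> AA"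
proof (cases "\<exists>b. good i j b")
  case True
  then have "good i j (SOME b. good i j b)" by (rule someI_ex)
  moreover have "pick i j = (SOME b. good i j b)" using True by (simp only: pick_def if_True)
  ultimately have "good i j (pick i j)" by simp
  then show ?thesis by (simp add: good_def)
next
  case False then show ?thesis by (simp add: pick_def alg_zero[OF AA])
qed

lemma corner_span:
  assumes i: "i \<in> E" and j: "j \<in> E" and x: "x \<in> AA" "i * x = x" "x * j = x"
  shows "\<exists>c. x = scal c * pick i j"
proof (cases "\<exists>b. good i j b")
  case False
  then have "x = 0" using x unfolding good_def by blast
  then show ?thesis by (intro exI[of _ 0]) simp
next
  case True
  define b where "b = pick i j"
  have "pick i j = (SOME b. good i j b)" using True by (simp only: pick_def if_True)
  then have gb: "good i j b" unfolding b_def using someI_ex[OF True] by simp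
  then have b: "b \<in> AA" "i * b = b" "b * j = b" "b \<noteq> 0" by (auto simp: good_def)
  have pi: "i \<in> AA" "i * i = i" "star i = i" and pj: "j \<in> AA" "j * j = j" "star j = j"
    using projE[OF i] projE[OF j] by auto
  have sb1: "j * star b = star b" using b(3) pj(3) by (metis star_mult)
  have sb2: "star b * i = star b" using b(2) pi(3) by (metis star_mult)
  have "\<exists>c. star b * x = scal c * j"
  proof (rule corner_scal[OF minE[OF j]])
    show "star b * x \<in> AA" using b(1) x(1) AA by (simp add: alg_mult alg_star)
    show "j * (star b * x) = star b * x" by (simp add: mult.assoc[symmetric] sb1)
    show "star b * x * j = star b * x" by (simp add: mult.assoc x(3))
  qed
  then obtain c1 where c1: "star b * x = scal c1 * j" by blast
  have "\<exists>d. b * star b = scal d * i"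
  proof (rule corner_scal[OF minE[OF i]])
    show "b * star b \<in> AA" using b(1) AA by (simp add: alg_mult alg_star)
    show "i * (b * star b) = b * star b" by (simp add: mult.assoc[symmetric] b(2))
    show "b * star b * i = b * star b" by (simp add: mult.assoc sb2)
  qed
  then obtain d where d: "b * star b = scal d * i" by blast
  have d0: "d \<noteq> 0"
  proof
    assume "d = 0"
    then have "star (star b) * star b = 0" using d by simp
    then have "star b = 0" by (rule star_self_zero)
    then show False using b(4) by (metis star_star star_zero)
  qed
  have "scal d * x = scal d * (i * x)" using x(2) by simp
  also have "\<dots> = b * star b * x" using d by (simp add: mult.assoc)
  also have "\<dots> = b * (scal c1 * j)" using c1 by (simp add: mult.assoc)
  also have "\<dots> = scal c1 * b" using b(3) by (simp add: scal_left_comm)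
  finally have "scal d * x = scal c1 * b" .
  then have "scal (inverse d) * (scal d * x) = scal (inverse d) * (scal c1 * b)" by simp
  then have "x = scal (inverse d * c1) * b" using d0 by (simp add: scal_assoc)
  then show ?thesis unfolding b_def by blast
qed

lemma fd_AA: "fd AA"
proof -
  define B where "B = (\<lambda>(i, j). pick i j) ` (E \<times> E)"
  have finB: "finite B" unfolding B_def using finE by simp
  have BA: "B \<subseteq> AA" unfolding B_def using pick_in by auto
  have "a \<in> bv.span B" if a: "a \<in> AA" for a
  proof -
    have "a = e * a * e" by (rule a_corner[OF a])
    also have "e * a = (\<Sum>i\<in>E. i * a)" by (simp add: e_def sum_distrib_right)
    also have "(\<Sum>i\<in>E. i * a) * e = (\<Sum>i\<in>E. i * a * e)" by (rule sum_distrib_right)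
    also have "\<dots> = (\<Sum>i\<in>E. \<Sum>j\<in>E. i * a * j)"
      by (rule sum.cong[OF refl]) (simp add: e_def sum_distrib_left)
    finally have aeq: "a = (\<Sum>i\<in>E. \<Sum>j\<in>E. i * a * j)" .
    have "(\<Sum>i\<in>E. \<Sum>j\<in>E. i * a * j) \<in> bv.span B"
    proof (intro bv.span_sum)
      fix i j assume i: "i \<in> E" and j: "j \<in> E"
      have pi: "i * i = i" and pj: "j * j = j" using projE[OF i] projE[OF j] by auto
      have "\<exists>c. i * a * j = scal c * pick i j"
      proof (rule corner_span[OF i j])
        show "i * a * j \<in> AA" using a projE[OF i] projE[OF j] AA by (simp add: alg_mult)
        show "i * (i * a * j) = i * a * j" by (simp add: mult.assoc[symmetric] pi)
        show "i * a * j * j = i * a * j" by (simp add: mult.assoc pj)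
      qed
      then obtain c where c: "i * a * j = scal c * pick i j" by blast
      have "pick i j \<in> B" unfolding B_def using i j by force
      then show "i * a * j \<in> bv.span B" unfolding c by (intro bv.span_scale bv.span_base)
    qed
    then show ?thesis using aeq by simp
  qed
  then show ?thesis unfolding fd_def using finB BA by blast
qed

end

lemma noinf_fd:
  assumes AA: "alg AA" and sf: "\<And>h. h \<in> AA \<Longrightarrow> star h = h \<Longrightarrow> finite (spec h)" and ni: "noinf AA"
  shows "fd AA"
proof -
  obtain E where E: "finite E" "\<forall>e\<in>E. minimal AA e" "\<forall>e\<in>E. \<forall>e'\<in>E. e \<noteq> e' \<longrightarrow> e * e' = 0"
    "\<forall>q. minimal AA q \<longrightarrow> \<not> (\<forall>e\<in>E. q * e = 0)"
    using maximal_family[OF AA ni] by blast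
  interpret m: maxsetting AA E
    by unfold_locales (use AA sf ni E in auto)
  show ?thesis by (rule m.fd_AA)
qed


lemma app_Abs: "bounded_op T \<Longrightarrow> app (Abs_bop T) = T"
  by (simp add: Abs_bop_inverse)

lemma app_inj: "app S = app T \<Longrightarrow> S = T"
  by (simp add: app_inject)

lemma app_zero_fun: "app 0 = (\<lambda>x. 0)" by (rule ext) simp
lemma app_comp: "app S \<circ> app T = app (S * T)" by (rule ext) simp
lemma app_one_fun: "app 1 = id" by (rule ext) simp
lemma app_star: "app (star T) = adj (app T)" by (simp add: star.rep_eq)

lemma app_sum: "app (sum f S) x = (\<Sum>s\<in>S. app (f s) x)"
  by (induct S rule: infinite_finite_induct) simp_all

lemma invertible_iff: "invertible X \<longleftrightarrow> (\<exists>S. bounded_op S \<and> S \<circ> app X = id \<and> app X \<circ> S = id)"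
proof
  assume "invertible X"
  then obtain S where "S * X = 1" "X * S = 1" unfolding invertible_def by blast
  then show "\<exists>S. bounded_op S \<and> S \<circ> app X = id \<and> app X \<circ> S = id"
    by (intro exI[of _ "app S"]) (simp add: app_bounded app_comp app_one_fun)
next
  assume "\<exists>S. bounded_op S \<and> S \<circ> app X = id \<and> app X \<circ> S = id"
  then obtain S where S: "bounded_op S" "S \<circ> app X = id" "app X \<circ> S = id" by blast
  have "app (Abs_bop S * X) = app 1" using S by (simp add: app_comp[symmetric] app_Abs app_one_fun)
  moreover have "app (X * Abs_bop S) = app 1" using S by (simp add: app_comp[symmetric] app_Abs app_one_fun)
  ultimately show "invertible X" unfolding invertible_def by (blast dest: app_inj)
qed

lemma spec_eq: "op_spectrum (app T) = spec T"
proof -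
  have "app (scal z - T) = (\<lambda>x. scaleC z x - app T x)" for z by (rule ext) simp
  then show ?thesis unfolding op_spectrum_def spec_def invertible_iff by simp
qed

context
  fixes A :: "('h::{complex_inner,complete_space} \<Rightarrow> 'h) set"
  assumes RA: "R_star_algebra A"
begin

definition AA where "AA = {T. app T \<in> A}"

lemma SA: "star_subalgebra A" using RA by (simp add: R_star_algebra_def)

lemma A_bnd: "T0 \<in> A \<Longrightarrow> bounded_op T0" using SA by (simp add: star_subalgebra_def)

lemma A_Abs: "T0 \<in> A \<Longrightarrow> app (Abs_bop T0) = T0 \<and> Abs_bop T0 \<in> AA"
proof -
  assume T0: "T0 \<in> A"
  then have "app (Abs_bop T0) = T0" by (rule app_Abs[OF A_bnd])
  then show ?thesis using T0 by (simp add: AA_def)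
qed

lemma alg_AA: "alg AA"
proof -
  have z: "(\<lambda>x. 0) \<in> A" and ad: "\<And>S T. S \<in> A \<Longrightarrow> T \<in> A \<Longrightarrow> (\<lambda>x. S x + T x) \<in> A \<and> S \<circ> T \<in> A"
    and sc: "\<And>c T. T \<in> A \<Longrightarrow> (\<lambda>x. scaleC c (T x)) \<in> A" and st: "\<And>T. T \<in> A \<Longrightarrow> adj T \<in> A"
    using SA unfolding star_subalgebra_def by blast+
  have 1: "app (S + T) = (\<lambda>x. app S x + app T x)" for S T :: "'h bop" by (rule ext) simp
  have 2: "app (scal c * T) = (\<lambda>x. scaleC c (app T x))" for c and T :: "'h bop" by (rule ext) simp
  have 3: "app (S * T) = app S \<circ> app T" for S T :: "'h bop" by (simp add: app_comp)
  show ?thesis unfolding alg_def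
  proof (intro conjI ballI allI)
    show "0 \<in> AA" using z by (simp add: app_zero_fun AA_def)
  next
    fix S T assume "S \<in> AA" "T \<in> AA"
    then have "app S \<in> A" "app T \<in> A" by (simp_all add: AA_def)
    then have "app (S + T) \<in> A" "app (S * T) \<in> A" using ad unfolding 1 3 by blast+
    then show "S + T \<in> AA" "S * T \<in> AA" by (simp_all add: AA_def)
  next
    fix c T assume "T \<in> AA"
    then have "app T \<in> A" by (simp add: AA_def)
    then have "app (scal c * T) \<in> A" using sc unfolding 2 by blast
    then show "scal c * T \<in> AA" by (simp add: AA_def)
  next
    fix T assume "T \<in> AA"
    then have "app T \<in> A" by (simp add: AA_def)
    then have "app (star T) \<in> A" using st unfolding app_star by blast
    then show "star T \<in> AA" by (simp add: AA_def)
  qed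
qed

lemma sfin_AA: "h \<in> AA \<Longrightarrow> star h = h \<Longrightarrow> finite (spec h)"
proof -
  assume h: "h \<in> AA" "star h = h"
  then have "adj (app h) = app h" by (metis app_star)
  then have "finite (op_spectrum (app h))" using RA h(1) by (simp add: R_star_algebra_def AA_def)
  then show ?thesis by (simp add: spec_eq)
qed

lemma isproj_app: "is_projection A (app P) \<longleftrightarrow> proj AA P"
proof -
  have "app P \<circ> app P = app P \<longleftrightarrow> P * P = P" by (simp only: app_comp app_inject)
  moreover have "adj (app P) = app P \<longleftrightarrow> star P = P" by (simp only: app_star[symmetric] app_inject)
  ultimately show ?thesis unfolding is_projection_def proj_def AA_def by simp
qed

lemma app_nz: "app P \<noteq> (\<lambda>x. 0) \<longleftrightarrow> P \<noteq> 0" by (simp only: app_zero_fun[symmetric] app_inject)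
lemma app_orth: "app P \<circ> app Q = (\<lambda>x. 0) \<longleftrightarrow> P * Q = 0" by (simp only: app_comp app_zero_fun[symmetric] app_inject)

lemma isproj_A: "is_projection A p \<Longrightarrow> p = app (Abs_bop p) \<and> Abs_bop p \<in> AA"
proof -
  assume "is_projection A p"
  then have "p \<in> A" by (simp add: is_projection_def)
  note h = A_Abs[OF this]
  show ?thesis by (intro conjI, rule sym[OF conjunct1[OF h]], rule conjunct2[OF h])
qed

lemma fam_iff:
  "(\<exists>P. infinite P \<and> (\<forall>p\<in>P. is_projection A p \<and> p \<noteq> (\<lambda>x. 0)) \<and>
        (\<forall>p\<in>P. \<forall>q\<in>P. p \<noteq> q \<longrightarrow> p \<circ> q = (\<lambda>x. 0)))
   \<longleftrightarrow> (\<exists>D. infinite D \<and> orthfam AA D)"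
proof
  assume "\<exists>P. infinite P \<and> (\<forall>p\<in>P. is_projection A p \<and> p \<noteq> (\<lambda>x. 0)) \<and>
        (\<forall>p\<in>P. \<forall>q\<in>P. p \<noteq> q \<longrightarrow> p \<circ> q = (\<lambda>x. 0))"
  then obtain P where P1: "infinite P" and P2: "\<forall>p\<in>P. is_projection A p \<and> p \<noteq> (\<lambda>x. 0)"
    and P3: "\<forall>p\<in>P. \<forall>q\<in>P. p \<noteq> q \<longrightarrow> p \<circ> q = (\<lambda>x. 0)" by (elim exE conjE)
  have P: "infinite P" "\<And>p. p \<in> P \<Longrightarrow> is_projection A p \<and> p \<noteq> (\<lambda>x. 0)"
    "\<And>p q. p \<in> P \<Longrightarrow> q \<in> P \<Longrightarrow> p \<noteq> q \<Longrightarrow> p \<circ> q = (\<lambda>x. 0)"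
    using P1 P2 P3 by auto
  have ap: "p \<in> P \<Longrightarrow> app (Abs_bop p) = p" for p using isproj_A P(2) by metis
  have inj: "inj_on Abs_bop P" by (rule inj_onI) (metis ap)
  have "infinite (Abs_bop ` P)"
  proof
    assume "finite (Abs_bop ` P)"
    then have "finite P" by (rule finite_imageD[OF _ inj])
    then show False using P(1) by simp
  qed
  moreover have "orthfam AA (Abs_bop ` P)"
    unfolding orthfam_def
  proof (intro conjI ballI impI)
    fix d assume "d \<in> Abs_bop ` P"
    then obtain p where p: "p \<in> P" "d = Abs_bop p" by blast
    then have "app d = p" using ap by simp
    then show "proj AA d" "d \<noteq> 0" using P(2)[OF p(1)] isproj_app app_nz by metis+
  next
    fix d d' assume "d \<in> Abs_bop ` P" "d' \<in> Abs_bop ` P" "d \<noteq> d'"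
    then obtain p p' where p: "p \<in> P" "d = Abs_bop p" "p' \<in> P" "d' = Abs_bop p'" "p \<noteq> p'" by blast
    then have "app d = p" "app d' = p'" using ap by simp_all
    then show "d * d' = 0" using P(3)[OF p(1,3,5)] app_orth by metis
  qed
  ultimately show "\<exists>D. infinite D \<and> orthfam AA D" by blast
next
  assume "\<exists>D. infinite D \<and> orthfam AA D"
  then obtain D where D: "infinite D" "orthfam AA D" by blast
  have "infinite (app ` D)"
  proof
    assume "finite (app ` D)"
    then have "finite D" by (rule finite_imageD) (simp add: inj_on_def app_inject)
    then show False using D(1) by simp
  qed
  moreover have "\<forall>p\<in>app ` D. is_projection A p \<and> p \<noteq> (\<lambda>x. 0)"
    using D(2) unfolding orthfam_def by (auto simp: isproj_app app_nz)
  moreover have "\<forall>p\<in>app ` D. \<forall>q\<in>app ` D. p \<noteq> q \<longrightarrow> p \<circ> q = (\<lambda>x. 0)"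
    using D(2) unfolding orthfam_def by (auto simp: app_orth)
  ultimately show "\<exists>P. infinite P \<and> (\<forall>p\<in>P. is_projection A p \<and> p \<noteq> (\<lambda>x. 0)) \<and>
        (\<forall>p\<in>P. \<forall>q\<in>P. p \<noteq> q \<longrightarrow> p \<circ> q = (\<lambda>x. 0))" by blast
qed

lemma chain_iff:
  "(\<exists>p :: nat \<Rightarrow> ('h \<Rightarrow> 'h). (\<forall>n. is_projection A (p n)) \<and> (\<forall>n. proj_less (p n) (p (Suc n))))
   \<longleftrightarrow> (\<exists>s. (\<forall>n. proj AA (s n)) \<and> (\<forall>n. s n * s (Suc n) = s n \<and> s n \<noteq> s (Suc n)))"
proof
  assume "\<exists>p :: nat \<Rightarrow> ('h \<Rightarrow> 'h). (\<forall>n. is_projection A (p n)) \<and> (\<forall>n. proj_less (p n) (p (Suc n)))"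
  then obtain p :: "nat \<Rightarrow> ('h \<Rightarrow> 'h)" where p: "\<And>n. is_projection A (p n)" "\<And>n. proj_less (p n) (p (Suc n))"
    by blast
  define s where "s n = Abs_bop (p n)" for n
  have sp: "app (s n) = p n" for n using isproj_A[OF p(1)] by (simp add: s_def)
  have "proj AA (s n)" for n using p(1)[of n] sp isproj_app by metis
  moreover have "s n * s (Suc n) = s n \<and> s n \<noteq> s (Suc n)" for n
    using p(2)[of n] unfolding proj_less_def proj_le_def sp[symmetric] app_comp app_inject by simp
  ultimately show "\<exists>s. (\<forall>n. proj AA (s n)) \<and> (\<forall>n. s n * s (Suc n) = s n \<and> s n \<noteq> s (Suc n))" by blast
next
  assume "\<exists>s. (\<forall>n. proj AA (s n)) \<and> (\<forall>n. s n * s (Suc n) = s n \<and> s n \<noteq> s (Suc n))"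
  then obtain s where s: "\<And>n. proj AA (s n)" "\<And>n. s n * s (Suc n) = s n" "\<And>n. s n \<noteq> s (Suc n)" by blast
  have a1: "is_projection A (app (s n))" for n using s(1) isproj_app by metis
  have a2: "proj_less (app (s n)) (app (s (Suc n)))" for n
    unfolding proj_less_def proj_le_def app_comp app_inject using s(2,3)[of n] by simp
  show "\<exists>p :: nat \<Rightarrow> ('h \<Rightarrow> 'h). (\<forall>n. is_projection A (p n)) \<and> (\<forall>n. proj_less (p n) (p (Suc n)))"
    by (rule exI[of _ "\<lambda>n. app (s n)"]) (simp add: a1 a2)
qed

lemma fd_iff: "finite_dim_alg A \<longleftrightarrow> fd AA"
proof
  assume "finite_dim_alg A"
  then obtain B where B: "finite B" "B \<subseteq> A" "\<And>T. T \<in> A \<Longrightarrow> \<exists>c. T = (\<lambda>x. \<Sum>b\<in>B. scaleC (c b) (b x))"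
    unfolding finite_dim_alg_def by blast
  define BB where "BB = Abs_bop ` B"
  have "finite BB" using B(1) by (simp add: BB_def)
  moreover have "BB \<subseteq> AA" using B(2) A_Abs unfolding BB_def by blast
  moreover have "T \<in> bv.span BB" if T: "T \<in> AA" for T
  proof -
    have "app T \<in> A" using T by (simp add: AA_def)
    then obtain c where c: "app T = (\<lambda>x. \<Sum>b\<in>B. scaleC (c b) (b x))" using B(3) by blast
    have "app T = app (\<Sum>b\<in>B. scal (c b) * Abs_bop b)"
    proof (rule ext)
      fix x
      have "app (\<Sum>b\<in>B. scal (c b) * Abs_bop b) x = (\<Sum>b\<in>B. scaleC (c b) (app (Abs_bop b) x))"
        by (simp add: app_sum)
      also have "\<dots> = (\<Sum>b\<in>B. scaleC (c b) (b x))"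
        by (rule sum.cong[OF refl]) (use B(2) A_Abs in auto)
      finally show "app T x = app (\<Sum>b\<in>B. scal (c b) * Abs_bop b) x" using c by simp
    qed
    then have "T = (\<Sum>b\<in>B. scal (c b) * Abs_bop b)" by (rule app_inj)
    also have "\<dots> \<in> bv.span BB"
      by (intro bv.span_sum bv.span_scale bv.span_base) (simp add: BB_def)
    finally show ?thesis .
  qed
  ultimately show "fd AA" unfolding fd_def by blast
next
  assume "fd AA"
  then obtain BB where BB: "finite BB" "BB \<subseteq> AA" "AA \<subseteq> bv.span BB" unfolding fd_def by blast
  define B where "B = app ` BB"
  have "finite B" using BB(1) by (simp add: B_def)
  moreover have "B \<subseteq> A" using BB(2) by (auto simp: B_def AA_def)
  moreover have "\<exists>c. T0 = (\<lambda>x. \<Sum>b\<in>B. scaleC (c b) (b x))" if T0: "T0 \<in> A" for T0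
  proof -
    have "Abs_bop T0 \<in> bv.span BB" using A_Abs[OF T0] BB(3) by blast
    then obtain u where u: "Abs_bop T0 = (\<Sum>v\<in>BB. scal (u v) * v)"
      using bv.span_finite[OF BB(1)] by blast
    have inj: "inj_on app BB" by (simp add: inj_on_def app_inject)
    have "T0 = (\<lambda>x. \<Sum>v\<in>BB. scaleC (u v) (app v x))"
    proof (rule ext)
      fix x
      have "T0 x = app (Abs_bop T0) x" using A_Abs[OF T0] by simp
      also have "\<dots> = (\<Sum>v\<in>BB. scaleC (u v) (app v x))" unfolding u by (simp add: app_sum)
      finally show "T0 x = (\<Sum>v\<in>BB. scaleC (u v) (app v x))" .
    qed
    also have "\<dots> = (\<lambda>x. \<Sum>b\<in>B. scaleC (u (Abs_bop b)) (b x))"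
      unfolding B_def by (simp add: sum.reindex[OF inj] app_inverse)
    finally show ?thesis by (rule exI[of _ "\<lambda>b. u (Abs_bop b)"])
  qed
  ultimately show "finite_dim_alg A" unfolding finite_dim_alg_def by blast
qed

lemma main:
  "((\<nexists>p :: nat \<Rightarrow> ('h \<Rightarrow> 'h).
             (\<forall>n. is_projection A (p n)) \<and> (\<forall>n. proj_less (p n) (p (Suc n))))
          \<longleftrightarrow>
          (\<nexists>P. infinite P \<and> (\<forall>p\<in>P. is_projection A p \<and> p \<noteq> (\<lambda>x. 0)) \<and>
             (\<forall>p\<in>P. \<forall>q\<in>P. p \<noteq> q \<longrightarrow> p \<circ> q = (\<lambda>x. 0))))
       \<and>
         ((\<nexists>P. infinite P \<and> (\<forall>p\<in>P. is_projection A p \<and> p \<noteq> (\<lambda>x. 0)) \<and>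
             (\<forall>p\<in>P. \<forall>q\<in>P. p \<noteq> q \<longrightarrow> p \<circ> q = (\<lambda>x. 0)))
          \<longleftrightarrow> finite_dim_alg A)"
proof -
  have c: "(\<exists>s. (\<forall>n. proj AA (s n)) \<and> (\<forall>n. s n * s (Suc n) = s n \<and> s n \<noteq> s (Suc n)))
      \<longleftrightarrow> (\<exists>D. infinite D \<and> orthfam AA D)"
  proof
    assume "\<exists>s. (\<forall>n. proj AA (s n)) \<and> (\<forall>n. s n * s (Suc n) = s n \<and> s n \<noteq> s (Suc n))"
    then obtain s where s: "\<And>n. proj AA (s n)" "\<And>n. s n * s (Suc n) = s n" "\<And>n. s n \<noteq> s (Suc n)" by blast
    show "\<exists>D. infinite D \<and> orthfam AA D" by (rule inc_chain_family[of AA s, OF alg_AA s])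
  next
    assume "\<exists>D. infinite D \<and> orthfam AA D"
    then obtain D where "infinite D" "orthfam AA D" by blast
    then show "\<exists>s. (\<forall>n. proj AA (s n)) \<and> (\<forall>n. s n * s (Suc n) = s n \<and> s n \<noteq> s (Suc n))"
      by (rule family_chain[OF alg_AA])
  qed
  have d: "noinf AA \<longleftrightarrow> fd AA"
  proof
    assume ni: "noinf AA" show "fd AA" by (rule noinf_fd[OF alg_AA sfin_AA ni])
  next
    assume "fd AA" then show "noinf AA" unfolding noinf_def using fd_noinf by blast
  qed
  show ?thesis unfolding chain_iff fam_iff fd_iff c d[symmetric] noinf_def by simp
qed

end


theorem proposition5p9:
  fixes A :: "('h::{complex_inner, complete_space} \<Rightarrow> 'h) set"
  assumes "R_star_algebra A"
  shows "((\<nexists>p :: nat \<Rightarrow> ('h \<Rightarrow> 'h).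
             (\<forall>n. is_projection A (p n)) \<and> (\<forall>n. proj_less (p n) (p (Suc n))))
          \<longleftrightarrow>
          (\<nexists>P. infinite P \<and> (\<forall>p\<in>P. is_projection A p \<and> p \<noteq> (\<lambda>x. 0)) \<and>
             (\<forall>p\<in>P. \<forall>q\<in>P. p \<noteq> q \<longrightarrow> p \<circ> q = (\<lambda>x. 0))))
       \<and>
         ((\<nexists>P. infinite P \<and> (\<forall>p\<in>P. is_projection A p \<and> p \<noteq> (\<lambda>x. 0)) \<and>
             (\<forall>p\<in>P. \<forall>q\<in>P. p \<noteq> q \<longrightarrow> p \<circ> q = (\<lambda>x. 0)))
          \<longleftrightarrow> finite_dim_alg A)"
  using assms by (rule main)

end
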